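(* There is a unique formal series solution of the symmetric $q$-$P(A_1)$ equation of the form $$x^{0,+}=\sum_{n\ge1}\sum_{i\le n}x^{0,+}_{n,i}(\Lambda_s,\xi,\mathbf b_s)t^n\phi_s^i,\qquad x^{0,+}_{1,1}=1.$$ Each coefficient $x^{0,+}_{n,i}$ is a rational function of $(\Lambda_s,\xi,\mathbf b_s)$, regular at every $(\Lambda_s,\xi,\mathbf b_s)\in\mathbb C^*\times\mathbb C^*\times\mathcal B_s$ with $1\notin\{q_1^mq_2^n:(m,n)\in\mathbb N^2\setminus\{(0,0)\}\}$, where $q_1=\xi\Lambda_s$, $q_2=\Lambda_s^{-1}$. Moreover, if $|\xi|<1$ and $\Lambda_s\in L_0^s:=\{x\in\mathbb C:1<|x|<|\xi|^{-1}\}$, this condition holds and the series $\sum_{n\ge1}\sum_{m\ge0}x^{0,+}_{n,n-m}(\Lambda_s,\xi,\mathbf b_s)\zeta_1^n\zeta_2^m$ (with $\zeta_1=t\phi_s$, $\zeta_2=\phi_s^{-1}$) converges near $(\zeta_1,\zeta_2)=(0,0)$; more precisely, for every open $L$ with $\overline L\subseteq L_0^s$ there is an open neighbourhood $Z\subseteq\mathbb C^2$ of $\mathbf 0$ on which, uniformly for $(\zeta,\Lambda_s)\in Z\times L$, it converges to a holomorphic function of $(\zeta_1,\zeta_2,\Lambda_s)$.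
   Context: $\mathcal B_s=\{\mathbf b_s=(a,b,c,d)\in\mathbb C^4:a,b,c,d\neq0\}$, $\xi\in\mathbb C^*$. The symmetric $q$-$P(A_1)$ equation for $x=x(t)$ is $$\frac{(x\hat x-\xi t^2)(x\check x-\xi^{-1}t^2)}{(x\hat x-1)(x\check x-1)}=\frac{(x-at)(x-a^{-1}t)(x-bt)(x-b^{-1}t)}{(x-c)(x-c^{-1})(x-d)(x-d^{-1})},$$ with $\hat x=x(\xi t)$, $\check x=x(\xi^{-1}t)$ (understood after clearing denominators). Formal setting: $\Lambda_s,\phi_s$ are indeterminates; the shift $\hat\cdot$ acts by $t\mapsto\xi t$, $\phi_s\mapsto\Lambda_s\phi_s$, $\Lambda_s\mapsto\Lambda_s$, so for $x=\sum_{n\ge1}x_n(\phi_s)t^n$ with $x_n(\phi_s)=\sum_{i\le n}x_{n,i}\phi_s^i$ one has $\hat x=\sum_n\xi^nx_n(\Lambda_s\phi_s)t^n$, $\check x=\sum_n\xi^{-n}x_n(\Lambda_s^{-1}\phi_s)t^n$. A formal series solution is such an $x$ satisfying the (denominator-cleared) equation identically as formal series in $t$ with Laurent-series-in-$\phi_s$ coefficients. *)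

theory Defs
  imports "HOL-Analysis.Analysis"
begin

text \<open>Formal series in t with Laurent-series-in-phi coefficients:
  f n i is the coefficient of t^n phi^i.  All series used below are supported
  in the region i \<le> n, for which the product is given by finite sums.\<close>

type_synonym fser = "nat \<Rightarrow> int \<Rightarrow> complex"

definition fmul :: "fser \<Rightarrow> fser \<Rightarrow> fser" where
  "fmul f g = (\<lambda>N j. \<Sum>k\<in>{..N}. \<Sum>i\<in>{j - int (N - k)..int k}. f k i * g (N - k) (j - i))"

definition fsub :: "fser \<Rightarrow> fser \<Rightarrow> fser" where
  "fsub f g = (\<lambda>n i. f n i - g n i)"

definition fmono :: "complex \<Rightarrow> nat \<Rightarrow> fser" where
  "fmono c k = (\<lambda>n i. if n = k \<and> i = 0 then c else 0)"

text \<open>Shift t -> s t, phi -> l phi: coefficient of t^n phi^i gets multiplied by s^n l^i.\<close>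
definition fshift :: "complex \<Rightarrow> complex \<Rightarrow> fser \<Rightarrow> fser" where
  "fshift s l x = (\<lambda>n i. s ^ n * l powi i * x n i)"

definition ansatz :: "fser \<Rightarrow> bool" where
  "ansatz x \<longleftrightarrow> (\<forall>n i. (n = 0 \<or> i > int n) \<longrightarrow> x n i = 0)"

text \<open>Denominator-cleared symmetric q-P(A1) equation, parameters (Lambda, xi, a, b, c, d).\<close>
definition qPA1_sol ::
  "complex \<Rightarrow> complex \<Rightarrow> complex \<Rightarrow> complex \<Rightarrow> complex \<Rightarrow> complex \<Rightarrow> fser \<Rightarrow> bool" where
  "qPA1_sol \<Lambda> \<xi> a b c d x \<longleftrightarrow>
    (let xh = fshift \<xi> \<Lambda> x; xc = fshift (inverse \<xi>) (inverse \<Lambda>) x in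
     fmul (fmul (fsub (fmul x xh) (fmono \<xi> 2)) (fsub (fmul x xc) (fmono (inverse \<xi>) 2)))
          (fmul (fmul (fsub x (fmono c 0)) (fsub x (fmono (inverse c) 0)))
                (fmul (fsub x (fmono d 0)) (fsub x (fmono (inverse d) 0))))
     =
     fmul (fmul (fsub (fmul x xh) (fmono 1 0)) (fsub (fmul x xc) (fmono 1 0)))
          (fmul (fmul (fsub x (fmono a 1)) (fsub x (fmono (inverse a) 1)))
                (fmul (fsub x (fmono b 1)) (fsub x (fmono (inverse b) 1)))))"

text \<open>Parameters (Lambda_s, xi, a, b, c, d).\<close>
type_synonym params = "complex \<times> complex \<times> complex \<times> complex \<times> complex \<times> complex"

inductive poly6 :: "(params \<Rightarrow> complex) \<Rightarrow> bool" where
  const: "poly6 (\<lambda>_. c)"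
| p1: "poly6 (\<lambda>(l, s, a, b, c, d). l)"
| p2: "poly6 (\<lambda>(l, s, a, b, c, d). s)"
| p3: "poly6 (\<lambda>(l, s, a, b, c, d). a)"
| p4: "poly6 (\<lambda>(l, s, a, b, c, d). b)"
| p5: "poly6 (\<lambda>(l, s, a, b, c, d). c)"
| p6: "poly6 (\<lambda>(l, s, a, b, c, d). d)"
| add: "poly6 f \<Longrightarrow> poly6 g \<Longrightarrow> poly6 (\<lambda>p. f p + g p)"
| mult: "poly6 f \<Longrightarrow> poly6 g \<Longrightarrow> poly6 (\<lambda>p. f p * g p)"

definition rational_regular_on :: "(params \<Rightarrow> complex) \<Rightarrow> params set \<Rightarrow> bool" where
  "rational_regular_on f S \<longleftrightarrow>
     (\<exists>P Q. poly6 P \<and> poly6 Q \<and> (\<forall>p\<in>S. Q p \<noteq> 0 \<and> f p = P p / Q p))"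

definition nonres :: "complex \<Rightarrow> complex \<Rightarrow> bool" where
  "nonres \<Lambda> \<xi> \<longleftrightarrow> (\<forall>m n::nat. (m, n) \<noteq> (0, 0) \<longrightarrow> (\<xi> * \<Lambda>) ^ m * (inverse \<Lambda>) ^ n \<noteq> 1)"

definition regular_params :: "params set" where
  "regular_params = {(l, s, a, b, c, d). l \<noteq> 0 \<and> s \<noteq> 0 \<and> a \<noteq> 0 \<and> b \<noteq> 0 \<and> c \<noteq> 0 \<and> d \<noteq> 0
                       \<and> nonres l s}"

definition L0s :: "complex \<Rightarrow> complex set" where
  "L0s \<xi> = {x. 1 < norm x \<and> norm x < inverse (norm \<xi>)}"

definition holo3 :: "(complex \<times> complex \<times> complex \<Rightarrow> complex) \<Rightarrow> (complex \<times> complex \<times> complex) set \<Rightarrow> bool" where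
  "holo3 F U \<longleftrightarrow> (\<forall>z\<in>U. \<exists>D. (F has_derivative D) (at z) \<and>
       (\<forall>u v w. D (\<i> * u, \<i> * v, \<i> * w) = \<i> * D (u, v, w)))"

end

theory Submission
  imports Defs "HOL-Computational_Algebra.Formal_Power_Series" "HOL-Complex_Analysis.Cauchy_Integral_Formula"
begin

type_synonym ser = "complex fps fps"

definition co :: "ser \<Rightarrow> nat \<Rightarrow> nat \<Rightarrow> complex" where
  "co f k m = fps_nth (fps_nth f k) m"

definition mk :: "(nat \<Rightarrow> nat \<Rightarrow> complex) \<Rightarrow> ser" where
  "mk F = Abs_fps (\<lambda>k. Abs_fps (\<lambda>m. F k m))"

lemma co_mk[simp]: "co (mk F) k m = F k m"
  by (simp add: co_def mk_def)

lemma ser_eqI: "(\<And>k m. co f k m = co g k m) \<Longrightarrow> f = g"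
  unfolding co_def by (intro fps_ext) auto

lemma co_mult: "co (f * g) k m = (\<Sum>i\<le>k. \<Sum>j\<le>m. co f i j * co g (k - i) (m - j))"
  by (simp add: co_def fps_mult_nth fps_sum_nth atLeast0AtMost)

lemma co_add[simp]: "co (f + g) k m = co f k m + co g k m"
  by (simp add: co_def)
lemma co_diff[simp]: "co (f - g) k m = co f k m - co g k m"
  by (simp add: co_def)
lemma co_minus[simp]: "co (- f) k m = - co f k m"
  by (simp add: co_def)
lemma co_0[simp]: "co 0 k m = 0"
  by (simp add: co_def)

definition cst :: "complex \<Rightarrow> ser" where
  "cst c = fps_const (fps_const c)"

lemma co_cst: "co (cst c) k m = (if k = 0 \<and> m = 0 then c else 0)"
  by (simp add: co_def cst_def)

lemma co_cst_mult[simp]: "co (cst c * f) k m = c * co f k m"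
  by (simp add: co_def cst_def)

lemma co_one: "co 1 k m = (if k = 0 \<and> m = 0 then 1 else 0)"
  by (simp add: co_def)

lemma cst_1[simp]: "cst 1 = 1" and cst_0[simp]: "cst 0 = 0"
  by (simp_all add: cst_def)
lemma cst_mult: "cst (a * b) = cst a * cst b"
  by (simp add: cst_def fps_const_mult)
lemma cst_add: "cst (a + b) = cst a + cst b"
  by (simp add: cst_def fps_const_add)
lemma cst_diff: "cst (a - b) = cst a - cst b"
  by (simp add: cst_def)

definition Z1 :: ser where "Z1 = fps_X"
definition Z2 :: ser where "Z2 = fps_const fps_X"

lemma co_Z1: "co Z1 k m = (if k = 1 \<and> m = 0 then 1 else 0)"
  by (simp add: co_def Z1_def fps_X_def)
lemma co_Z2: "co Z2 k m = (if k = 0 \<and> m = 1 then 1 else 0)"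
  by (simp add: co_def Z2_def fps_X_def)

lemma co_mult_Z1: "co (Z1 * f) k m = (if k = 0 then 0 else co f (k - 1) m)"
  by (cases k) (simp_all add: co_def Z1_def)



lemma co_mult_Z2: "co (Z2 * f) k m = (if m = 0 then 0 else co f k (m - 1))"
  by (cases m) (simp_all add: co_def Z2_def)

definition E :: "nat \<Rightarrow> nat \<Rightarrow> ser" where
  "E k m = mk (\<lambda>i j. if i = k \<and> j = m then 1 else 0)"

lemma co_E[simp]: "co (E k m) i j = (if i = k \<and> j = m then 1 else 0)"
  by (simp add: E_def)

lemma co_const00[simp]: "co (f * g) 0 0 = co f 0 0 * co g 0 0"
  by (simp add: co_mult)

definition scal :: "complex \<Rightarrow> complex \<Rightarrow> ser \<Rightarrow> ser" where
  "scal s1 s2 f = mk (\<lambda>k m. s1 ^ k * s2 ^ m * co f k m)"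

lemma co_scal[simp]: "co (scal s1 s2 f) k m = s1 ^ k * s2 ^ m * co f k m"
  by (simp add: scal_def)

lemma scal_mult: "scal s1 s2 (f * g) = scal s1 s2 f * scal s1 s2 g"
proof (rule ser_eqI)
  fix k m
  show "co (scal s1 s2 (f * g)) k m = co (scal s1 s2 f * scal s1 s2 g) k m"
    unfolding co_scal co_mult sum_distrib_left
  proof (intro sum.cong refl)
    fix i j assume "i \<in> {..k}" "j \<in> {..m}"
    then have "s1 ^ k = s1 ^ i * s1 ^ (k - i)" "s2 ^ m = s2 ^ j * s2 ^ (m - j)"
      by (simp_all flip: power_add)
    then show "s1 ^ k * s2 ^ m * (co f i j * co g (k - i) (m - j)) =
      s1 ^ i * s2 ^ j * co f i j * (s1 ^ (k - i) * s2 ^ (m - j) * co g (k - i) (m - j))"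
      by simp
  qed
qed

lemma scal_add: "scal s1 s2 (f + g) = scal s1 s2 f + scal s1 s2 g"
  by (rule ser_eqI) (simp add: algebra_simps)
lemma scal_diff: "scal s1 s2 (f - g) = scal s1 s2 f - scal s1 s2 g"
  by (rule ser_eqI) (simp add: algebra_simps)
lemma scal_cst: "scal s1 s2 (cst c) = cst c"
  by (rule ser_eqI) (simp add: co_cst)
lemma scal_1: "scal s1 s2 1 = 1"
  using scal_cst[of s1 s2 1] by simp
lemma scal_Z1: "scal s1 s2 Z1 = cst s1 * Z1"
  by (rule ser_eqI) (simp add: co_Z1)
lemma scal_Z2: "scal s1 s2 Z2 = cst s2 * Z2"
  by (rule ser_eqI) (simp add: co_Z2)
lemma scal_power: "scal s1 s2 (f ^ n) = scal s1 s2 f ^ n"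
  by (induction n) (simp_all add: scal_1 scal_mult)
lemma scal_scal: "scal a b (scal c d f) = scal (a * c) (b * d) f"
  by (rule ser_eqI) (simp add: power_mult_distrib)
lemma scal_11: "scal 1 1 f = f"
  by (rule ser_eqI) simp
lemma co_scal00[simp]: "co (scal s1 s2 f) 0 0 = co f 0 0"
  by simp
lemma scal_E: "scal s1 s2 (E k m) = cst (s1 ^ k * s2 ^ m) * E k m"
  by (rule ser_eqI) simp

definition agree :: "nat \<Rightarrow> nat \<Rightarrow> ser \<Rightarrow> ser \<Rightarrow> bool" where
  "agree k m f g \<longleftrightarrow> (\<forall>i\<le>k. \<forall>j\<le>m. co f i j = co g i j)"

lemma agree_refl[intro]: "agree k m f f"
  by (simp add: agree_def)
lemma agree_sym: "agree k m f g \<Longrightarrow> agree k m g f"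
  by (simp add: agree_def)
lemma agree_trans: "agree k m f g \<Longrightarrow> agree k m g h \<Longrightarrow> agree k m f h"
  by (simp add: agree_def)
lemma agree_add: "agree k m f f' \<Longrightarrow> agree k m g g' \<Longrightarrow> agree k m (f + g) (f' + g')"
  by (simp add: agree_def)
lemma agree_diff: "agree k m f f' \<Longrightarrow> agree k m g g' \<Longrightarrow> agree k m (f - g) (f' - g')"
  by (simp add: agree_def)
lemma agree_mult: "agree k m f f' \<Longrightarrow> agree k m g g' \<Longrightarrow> agree k m (f * g) (f' * g')"
  unfolding agree_def co_mult
  by (intro allI impI sum.cong refl) (metis atMost_iff diff_le_self le_trans)
lemma agree_scal: "agree k m f f' \<Longrightarrow> agree k m (scal s1 s2 f) (scal s1 s2 f')"
  by (simp add: agree_def)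

lemma sum_delta_mult: "finite A \<Longrightarrow> (\<Sum>b\<in>A. (if b = m then 1 else 0) * h b) = (if m \<in> A then h m else (0::complex))"
proof -
  assume A: "finite A"
  have "(\<Sum>b\<in>A. (if b = m then 1 else 0) * h b) = (\<Sum>b\<in>A. if b = m then h b else 0)"
    by (intro sum.cong) auto
  then show ?thesis using A by (simp add: sum.delta')
qed

lemma E_mult_agree:
  "agree k m (E k m * g) (cst (co g 0 0) * E k m)"
  unfolding agree_def
proof (intro allI impI)
  fix i j assume ij: "i \<le> k" "j \<le> m"
  have "co (E k m * g) i j = (\<Sum>a\<le>i. \<Sum>b\<le>j. (if a = k \<and> b = m then 1 else 0) * co g (i - a) (j - b))"
    by (simp add: co_mult)
  also have "\<dots> = (\<Sum>a\<le>i. if a = k then (\<Sum>b\<le>j. if b = m then co g (i - k) (j - m) else 0) else 0)"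
    by (intro sum.cong refl) (auto simp: sum_delta_mult)
  also have "\<dots> = (if i = k \<and> j = m then co g 0 0 else 0)"
    using ij by (simp add: sum.delta')
  finally show "co (E k m * g) i j = co (cst (co g 0 0) * E k m) i j"
    by simp
qed

lemma EE_agree:
  assumes "(k, m) \<noteq> (0, 0)"
  shows "agree k m (E k m * E k m) 0"
  unfolding agree_def
proof (intro allI impI)
  fix i j assume ij: "i \<le> k" "j \<le> m"
  have "co (E k m * E k m) i j = (\<Sum>a\<le>i. \<Sum>b\<le>j. (if a = k \<and> b = m then 1 else 0) * (if i - a = k \<and> j - b = m then 1 else 0))"
    by (simp add: co_mult)
  also have "\<dots> = 0"
    using ij assms by (auto intro!: sum.neutral)
  finally show "co (E k m * E k m) i j = co 0 i j" by simp
qed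

definition lin :: "nat \<Rightarrow> nat \<Rightarrow> ser \<Rightarrow> ser \<Rightarrow> complex \<Rightarrow> bool" where
  "lin k m f' f a \<longleftrightarrow> agree k m f' (f + cst a * E k m)"

lemma lin_refl: "lin k m f f 0"
  by (simp add: lin_def agree_refl)

lemma lin_add: "lin k m f' f a \<Longrightarrow> lin k m g' g b \<Longrightarrow> lin k m (f' + g') (f + g) (a + b)"
  unfolding lin_def by (drule (1) agree_add) (simp add: cst_add algebra_simps)

lemma lin_diff: "lin k m f' f a \<Longrightarrow> lin k m g' g b \<Longrightarrow> lin k m (f' - g') (f - g) (a - b)"
  unfolding lin_def by (drule (1) agree_diff) (simp add: cst_diff algebra_simps)

lemma lin_scal: "lin k m f' f a \<Longrightarrow> lin k m (scal s1 s2 f') (scal s1 s2 f) (s1 ^ k * s2 ^ m * a)"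
  unfolding lin_def by (drule agree_scal[of _ _ _ _ s1 s2]) (simp add: scal_add scal_mult scal_cst scal_E cst_mult algebra_simps)

lemma lin_mult:
  assumes "(k, m) \<noteq> (0, 0)" "lin k m f' f a" "lin k m g' g b"
  shows "lin k m (f' * g') (f * g) (a * co g 0 0 + b * co f 0 0)"
proof -
  have "agree k m (f' * g') ((f + cst a * E k m) * (g + cst b * E k m))"
    using assms(2,3) unfolding lin_def by (rule agree_mult)
  also have "(f + cst a * E k m) * (g + cst b * E k m)
     = f * g + cst a * (E k m * g) + cst b * (E k m * f) + cst (a * b) * (E k m * E k m)"
    by (simp add: cst_mult algebra_simps)
  finally have 1: "agree k m (f' * g') (f * g + cst a * (E k m * g) + cst b * (E k m * f) + cst (a * b) * (E k m * E k m))" .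
  have 2: "agree k m (f * g + cst a * (E k m * g) + cst b * (E k m * f) + cst (a * b) * (E k m * E k m))
     (f * g + cst a * (cst (co g 0 0) * E k m) + cst b * (cst (co f 0 0) * E k m) + cst (a * b) * 0)"
    by (intro agree_add agree_mult agree_refl E_mult_agree EE_agree assms(1))
  show ?thesis
    unfolding lin_def using agree_trans[OF 1 2]
    by (simp add: cst_mult cst_add algebra_simps)
qed

lemma lin_coeff:
  assumes "lin k m f' f a"
  shows "co f' k m = co f k m + a"
  using assms unfolding lin_def agree_def by simp

lemma co_pow00[simp]: "co (f ^ n) 0 0 = co f 0 0 ^ n"
  by (induction n) (simp_all add: co_one)

lemma co_Z1_00[simp]: "co Z1 0 0 = 0" and co_Z2_00[simp]: "co Z2 0 0 = 0"
  and co_cst_00[simp]: "co (cst c) 0 0 = c" and co_one_00[simp]: "co 1 0 0 = 1"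
  by (simp_all add: co_Z1 co_Z2 co_cst co_one)

definition GG :: "complex \<Rightarrow> complex \<Rightarrow> complex \<Rightarrow> complex \<Rightarrow> complex \<Rightarrow> complex \<Rightarrow> ser \<Rightarrow> ser" where
"GG l s a b c d v =
 (cst (s * l) * v * scal (s * l) (inverse l) v - cst s * Z2^2) *
 (cst (inverse (s * l)) * v * scal (inverse (s * l)) l v - cst (inverse s) * Z2^2) *
 (Z1 * v - cst c) * (Z1 * v - cst (inverse c)) * (Z1 * v - cst d) * (Z1 * v - cst (inverse d))
 - (cst (s * l) * Z1^2 * v * scal (s * l) (inverse l) v - 1) *
   (cst (inverse (s * l)) * Z1^2 * v * scal (inverse (s * l)) l v - 1) *
   (v - cst a * Z2) * (v - cst (inverse a) * Z2) * (v - cst b * Z2) * (v - cst (inverse b) * Z2)"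

schematic_goal lin_GG_raw:
  assumes "(k, m) \<noteq> (0, 0)" "lin k m v' v \<alpha>"
  shows "lin k m
 ((cst (s * l) * v' * scal (s * l) (inverse l) v' - cst s * Z2^2) *
 (cst (inverse (s * l)) * v' * scal (inverse (s * l)) l v' - cst (inverse s) * Z2^2) *
 (Z1 * v' - cst c) * (Z1 * v' - cst (inverse c)) * (Z1 * v' - cst d) * (Z1 * v' - cst (inverse d))
 - (cst (s * l) * Z1^2 * v' * scal (s * l) (inverse l) v' - 1) *
   (cst (inverse (s * l)) * Z1^2 * v' * scal (inverse (s * l)) l v' - 1) *
   (v' - cst a * Z2) * (v' - cst (inverse a) * Z2) * (v' - cst b * Z2) * (v' - cst (inverse b) * Z2))
 ((cst (s * l) * v * scal (s * l) (inverse l) v - cst s * Z2^2) *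
 (cst (inverse (s * l)) * v * scal (inverse (s * l)) l v - cst (inverse s) * Z2^2) *
 (Z1 * v - cst c) * (Z1 * v - cst (inverse c)) * (Z1 * v - cst d) * (Z1 * v - cst (inverse d))
 - (cst (s * l) * Z1^2 * v * scal (s * l) (inverse l) v - 1) *
   (cst (inverse (s * l)) * Z1^2 * v * scal (inverse (s * l)) l v - 1) *
   (v - cst a * Z2) * (v - cst (inverse a) * Z2) * (v - cst b * Z2) * (v - cst (inverse b) * Z2))
 ?A"
  by (rule lin_refl lin_mult lin_add lin_diff lin_scal assms)+

lemma lin_coeff2: "lin k m f' f A \<Longrightarrow> A = B \<Longrightarrow> co f' k m = co f k m + B"
  using lin_coeff by blast

definition Lc :: "complex \<Rightarrow> complex \<Rightarrow> nat \<Rightarrow> nat \<Rightarrow> complex" where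
  "Lc l s k m = (s * l) ^ k * (inverse l) ^ m + inverse ((s * l) ^ k * (inverse l) ^ m) - 2"

lemma lin_GG:
  assumes "(k, m) \<noteq> (0, 0)" "lin k m v' v \<alpha>" "co v 0 0 = 1"
    and nz: "l \<noteq> 0" "s \<noteq> 0" "c \<noteq> 0" "d \<noteq> 0"
  shows "co (GG l s a b c d v') k m = co (GG l s a b c d v) k m + \<alpha> * Lc l s k m"
  unfolding GG_def
  apply (rule lin_coeff2[OF lin_GG_raw[OF assms(1,2)]])
  using assms(3) nz unfolding Lc_def
  by (simp add: power_mult_distrib power_inverse field_simps)

primrec tab :: "complex \<Rightarrow> complex \<Rightarrow> complex \<Rightarrow> complex \<Rightarrow> complex \<Rightarrow> complex \<Rightarrow> nat \<Rightarrow> ser" where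
  "tab l s a b c d 0 = 1"
| "tab l s a b c d (Suc D) = mk (\<lambda>k m. if k + m \<le> D then co (tab l s a b c d D) k m
      else if k + m = Suc D then - co (GG l s a b c d (tab l s a b c d D)) k m / Lc l s k m else 0)"

lemma tab_zero: "D < k + m \<Longrightarrow> co (tab l s a b c d D) k m = 0"
  by (induction D arbitrary: k m) (auto simp: co_one)

lemma tab_stable_Suc: "k + m \<le> D \<Longrightarrow> co (tab l s a b c d (Suc D)) k m = co (tab l s a b c d D) k m"
  by simp

lemma tab_stable: "D \<le> D' \<Longrightarrow> k + m \<le> D \<Longrightarrow> co (tab l s a b c d D') k m = co (tab l s a b c d D) k m"
  by (induction D' rule: dec_induct) auto

lemma tab_00: "co (tab l s a b c d D) 0 0 = 1"
  using tab_stable[of 0 D 0 0] by (simp add: co_one)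

lemma tab_new: "k + m = Suc D \<Longrightarrow>
  co (tab l s a b c d (Suc D)) k m = - co (GG l s a b c d (tab l s a b c d D)) k m / Lc l s k m"
  by simp

definition UU :: "complex \<Rightarrow> complex \<Rightarrow> complex \<Rightarrow> complex \<Rightarrow> complex \<Rightarrow> complex \<Rightarrow> ser" where
  "UU l s a b c d = mk (\<lambda>k m. co (tab l s a b c d (k + m)) k m)"

lemma UU_tab: "k + m \<le> D \<Longrightarrow> co (UU l s a b c d) k m = co (tab l s a b c d D) k m"
  by (simp add: UU_def tab_stable)

lemma UU_00: "co (UU l s a b c d) 0 0 = 1"
  by (simp add: UU_def tab_00)

lemma Lc_nz:
  assumes "nonres l s" "l \<noteq> 0" "s \<noteq> 0" "(k, m) \<noteq> (0, 0)"
  shows "Lc l s k m \<noteq> 0"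
proof -
  define Q where "Q = (s * l) ^ k * (inverse l) ^ m"
  have Q1: "Q \<noteq> 1" using assms(1,4) unfolding nonres_def Q_def by (auto simp: mult.commute)
  have Q0: "Q \<noteq> 0" using assms(2,3) by (simp add: Q_def)
  have "Lc l s k m = (Q - 1)^2 / Q"
    unfolding Lc_def Q_def[symmetric] using Q0 by (simp add: field_simps power2_eq_square)
  then show ?thesis using Q0 Q1 by simp
qed

lemma lin_from_box:
  assumes "k + m = Suc D"
    and box: "\<And>i j. i \<le> k \<Longrightarrow> j \<le> m \<Longrightarrow> (i, j) \<noteq> (k, m) \<Longrightarrow> co v i j = co (tab l s a b c d D) i j"
  shows "lin k m v (tab l s a b c d D) (co v k m)"
  unfolding lin_def agree_def
proof (intro allI impI)
  fix i j assume ij: "i \<le> k" "j \<le> m"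
  show "co v i j = co (tab l s a b c d D + cst (co v k m) * E k m) i j"
  proof (cases "(i, j) = (k, m)")
    case True
    then show ?thesis using assms(1) by (simp add: tab_zero)
  next
    case False
    then show ?thesis using box[OF ij False] by auto
  qed
qed

definition regp :: "complex \<Rightarrow> complex \<Rightarrow> complex \<Rightarrow> complex \<Rightarrow> complex \<Rightarrow> complex \<Rightarrow> bool" where
  "regp l s a b c d \<longleftrightarrow> l \<noteq> 0 \<and> s \<noteq> 0 \<and> a \<noteq> 0 \<and> b \<noteq> 0 \<and> c \<noteq> 0 \<and> d \<noteq> 0 \<and> nonres l s"

lemma GG_00:
  assumes "co v 0 0 = 1" "l \<noteq> 0" "s \<noteq> 0" "c \<noteq> 0" "d \<noteq> 0"
  shows "co (GG l s a b c d v) 0 0 = 0"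
  using assms unfolding GG_def by (simp add: field_simps)

lemma UU_sol:
  assumes "regp l s a b c d"
  shows "GG l s a b c d (UU l s a b c d) = 0"
proof (rule ser_eqI)
  fix k m
  show "co (GG l s a b c d (UU l s a b c d)) k m = co 0 k m"
  proof (cases "(k, m) = (0, 0)")
    case True
    then show ?thesis using assms GG_00[OF UU_00] by (auto simp: regp_def)
  next
    case False
    then obtain D where D: "k + m = Suc D" by (cases "k + m") auto
    have lin: "lin k m (UU l s a b c d) (tab l s a b c d D) (co (UU l s a b c d) k m)"
    proof (rule lin_from_box[OF D])
      fix i j assume "i \<le> k" "j \<le> m" "(i, j) \<noteq> (k, m)"
      then have "i + j \<le> D" using D by auto
      then show "co (UU l s a b c d) i j = co (tab l s a b c d D) i j" by (rule UU_tab)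
    qed
    have Lnz: "Lc l s k m \<noteq> 0" using assms False by (intro Lc_nz) (auto simp: regp_def)
    have "co (GG l s a b c d (UU l s a b c d)) k m
        = co (GG l s a b c d (tab l s a b c d D)) k m + co (UU l s a b c d) k m * Lc l s k m"
      using assms False by (intro lin_GG[OF _ lin]) (auto simp: regp_def tab_00)
    also have "co (UU l s a b c d) k m = co (tab l s a b c d (Suc D)) k m"
      using D by (intro UU_tab) simp
    also have "\<dots> = - co (GG l s a b c d (tab l s a b c d D)) k m / Lc l s k m"
      using D by (rule tab_new)
    finally show ?thesis using Lnz by simp
  qed
qed

lemma sol_unique:
  assumes "regp l s a b c d" "co v 0 0 = 1" "GG l s a b c d v = 0"
  shows "v = UU l s a b c d"
proof -
  have "\<forall>k m. k + m \<le> D \<longrightarrow> co v k m = co (tab l s a b c d D) k m" for D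
  proof (induction D)
    case 0
    then show ?case using assms(2) by (auto simp: co_one)
  next
    case (Suc D)
    show ?case
    proof (intro allI impI)
      fix k m assume km: "k + m \<le> Suc D"
      show "co v k m = co (tab l s a b c d (Suc D)) k m"
      proof (cases "k + m \<le> D")
        case True
        then show ?thesis using Suc.IH by simp
      next
        case False
        then have D: "k + m = Suc D" using km by simp
        then have nz: "(k, m) \<noteq> (0, 0)" by auto
        have lin: "lin k m v (tab l s a b c d D) (co v k m)"
        proof (rule lin_from_box[OF D])
          fix i j assume "i \<le> k" "j \<le> m" "(i, j) \<noteq> (k, m)"
          then have "i + j \<le> D" using D by auto
          then show "co v i j = co (tab l s a b c d D) i j" using Suc.IH by simp
        qed
        have Lnz: "Lc l s k m \<noteq> 0" using assms nz by (intro Lc_nz) (auto simp: regp_def)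
        have "0 = co (GG l s a b c d v) k m" using assms(3) by simp
        also have "\<dots> = co (GG l s a b c d (tab l s a b c d D)) k m + co v k m * Lc l s k m"
          using assms nz by (intro lin_GG[OF _ lin]) (auto simp: regp_def tab_00)
        finally have "co v k m * Lc l s k m = - co (GG l s a b c d (tab l s a b c d D)) k m"
          by (metis add_eq_0_iff)
        then have "co v k m = - co (GG l s a b c d (tab l s a b c d D)) k m / Lc l s k m"
          using Lnz by (metis minus_divide_left nonzero_mult_div_cancel_right)
        then show ?thesis using tab_new[OF D] by simp
      qed
    qed
  qed
  then show ?thesis
    by (intro ser_eqI) (simp add: UU_def)
qed

definition toS :: "fser \<Rightarrow> ser" where
  "toS x = mk (\<lambda>k m. x k (int k - int m))"

lemma co_toS[simp]: "co (toS x) k m = x k (int k - int m)"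
  by (simp add: toS_def)

lemma sum_int_interval:
  "(\<Sum>i\<in>{a - int M..a}. h i) = (\<Sum>m\<le>M. h (a - int m))"
  by (rule sum.reindex_bij_witness[of _ "\<lambda>i. a - int i" "\<lambda>i. nat (a - i)"]) auto

lemma toS_fmul: "toS (fmul f g) = toS f * toS g"
proof (rule ser_eqI)
  fix N M
  have "co (toS (fmul f g)) N M =
    (\<Sum>k\<le>N. \<Sum>i\<in>{int k - int M..int k}. f k i * g (N - k) (int N - int M - i))"
    unfolding co_toS fmul_def
    by (intro sum.cong refl) (simp add: algebra_simps)
  also have "\<dots> = (\<Sum>k\<le>N. \<Sum>m\<le>M. f k (int k - int m) * g (N - k) (int N - int M - (int k - int m)))"
    by (simp add: sum_int_interval)
  also have "\<dots> = (\<Sum>k\<le>N. \<Sum>m\<le>M. f k (int k - int m) * g (N - k) (int (N - k) - int (M - m)))"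
    by (intro sum.cong refl) (auto simp: of_nat_diff algebra_simps)
  also have "\<dots> = co (toS f * toS g) N M"
    by (simp add: co_mult)
  finally show "co (toS (fmul f g)) N M = co (toS f * toS g) N M" .
qed

lemma toS_fsub: "toS (fsub f g) = toS f - toS g"
  by (rule ser_eqI) (simp add: fsub_def)

lemma co_Z1_pow_mult: "co (Z1 ^ k * f) i j = (if k \<le> i then co f (i - k) j else 0)"
  by (induction k arbitrary: i) (auto simp: mult.assoc co_mult_Z1 Suc_le_eq gr0_conv_Suc)

lemma co_Z2_pow_mult: "co (Z2 ^ k * f) i j = (if k \<le> j then co f i (j - k) else 0)"
  by (induction k arbitrary: j) (auto simp: mult.assoc co_mult_Z2 Suc_le_eq gr0_conv_Suc)

lemma co_Z2_pow: "co (Z2 ^ k) i j = (if i = 0 \<and> j = k then 1 else 0)"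
  using co_Z2_pow_mult[of k 1 i j] by (auto simp: co_one)

lemma E_Z: "E k m = Z1 ^ k * Z2 ^ m"
  by (rule ser_eqI) (auto simp: co_Z1_pow_mult co_Z2_pow)

lemma toS_fmono: "toS (fmono c k) = cst c * E k k"
  by (rule ser_eqI) (auto simp: fmono_def)

lemma toS_fshift:
  assumes "l \<noteq> 0"
  shows "toS (fshift s l x) = scal (s * l) (inverse l) (toS x)"
proof (rule ser_eqI)
  fix k m
  have "l powi (int k - int m) = l ^ k * inverse l ^ m"
    using assms by (simp add: power_int_diff power_inverse divide_inverse)
  then show "co (toS (fshift s l x)) k m = co (scal (s * l) (inverse l) (toS x)) k m"
    by (simp add: fshift_def power_mult_distrib)
qed

definition supp :: "fser \<Rightarrow> bool" where
  "supp f \<longleftrightarrow> (\<forall>n j. int n < j \<longrightarrow> f n j = 0)"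

lemma supp_fmul: "supp (fmul f g)"
  unfolding supp_def fmul_def by auto

lemma toS_inj:
  assumes "supp f" "supp g" "toS f = toS g"
  shows "f = g"
proof (intro ext)
  fix n j
  show "f n j = g n j"
  proof (cases "int n < j")
    case True then show ?thesis using assms(1,2) by (simp add: supp_def)
  next
    case False
    then have j: "j = int n - int (nat (int n - j))" by simp
    have "co (toS f) n (nat (int n - j)) = co (toS g) n (nat (int n - j))"
      using assms(3) by simp
    then show ?thesis by (subst (1 2) j) simp
  qed
qed

lemma ring_fact:
  fixes z A B C1 C2 C3 C4 F7 F8 D1 D2 D3 D4 :: "'a::comm_ring_1"
  shows "(z^2*A)*(z^2*B)*C1*C2*C3*C4 - F7*F8*(z*D1)*(z*D2)*(z*D3)*(z*D4)
       = z^4*(A*B*C1*C2*C3*C4 - F7*F8*D1*D2*D3*D4)"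
  by (simp add: algebra_simps power2_eq_square power4_eq_xxxx)

lemma qPA1_series:
  assumes "l \<noteq> 0" "s \<noteq> 0" "toS x = Z1 * v"
  shows "qPA1_sol l s a b c d x \<longleftrightarrow> GG l s a b c d v = 0"
proof -
  let ?xh = "fshift s l x" and ?xc = "fshift (inverse s) (inverse l) x"
  have xh: "toS ?xh = cst (s * l) * Z1 * scal (s * l) (inverse l) v"
    using assms by (simp add: toS_fshift scal_mult scal_Z1)
  have xc: "toS ?xc = cst (inverse (s * l)) * Z1 * scal (inverse (s * l)) l v"
    using assms by (simp add: toS_fshift scal_mult scal_Z1 mult.commute)
  have E22: "E 2 2 = Z1^2 * Z2^2" and E00: "E 0 0 = 1" and E11: "E 1 1 = Z1 * Z2"
    by (simp_all add: E_Z)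
  have f1: "toS (fsub (fmul x ?xh) (fmono s 2)) = Z1^2 * (cst (s * l) * v * scal (s * l) (inverse l) v - cst s * Z2^2)"
    by (simp add: toS_fsub toS_fmul toS_fmono xh assms(3) E22 algebra_simps power2_eq_square)
  have f2: "toS (fsub (fmul x ?xc) (fmono (inverse s) 2)) = Z1^2 * (cst (inverse (s * l)) * v * scal (inverse (s * l)) l v - cst (inverse s) * Z2^2)"
    by (simp add: toS_fsub toS_fmul toS_fmono xc assms(3) E22 algebra_simps power2_eq_square)
  have f7: "toS (fsub (fmul x ?xh) (fmono 1 0)) = cst (s * l) * Z1^2 * v * scal (s * l) (inverse l) v - 1"
    by (simp add: toS_fsub toS_fmul toS_fmono xh assms(3) E00 algebra_simps power2_eq_square)
  have f8: "toS (fsub (fmul x ?xc) (fmono 1 0)) = cst (inverse (s * l)) * Z1^2 * v * scal (inverse (s * l)) l v - 1"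
    by (simp add: toS_fsub toS_fmul toS_fmono xc assms(3) E00 algebra_simps power2_eq_square)
  have fc: "toS (fsub x (fmono e 0)) = Z1 * v - cst e" for e
    by (simp add: toS_fsub toS_fmono assms(3) E00)
  have fa: "toS (fsub x (fmono e 1)) = Z1 * (v - cst e * Z2)" for e
    by (simp add: toS_fsub toS_fmono assms(3) E_Z algebra_simps)
  have "qPA1_sol l s a b c d x \<longleftrightarrow>
     toS (fmul (fmul (fsub (fmul x ?xh) (fmono s 2)) (fsub (fmul x ?xc) (fmono (inverse s) 2)))
          (fmul (fmul (fsub x (fmono c 0)) (fsub x (fmono (inverse c) 0)))
                (fmul (fsub x (fmono d 0)) (fsub x (fmono (inverse d) 0)))))
     = toS (fmul (fmul (fsub (fmul x ?xh) (fmono 1 0)) (fsub (fmul x ?xc) (fmono 1 0)))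
          (fmul (fmul (fsub x (fmono a 1)) (fsub x (fmono (inverse a) 1)))
                (fmul (fsub x (fmono b 1)) (fsub x (fmono (inverse b) 1)))))"
    unfolding qPA1_sol_def Let_def using toS_inj supp_fmul by metis
  also have "\<dots> \<longleftrightarrow> Z1^4 * GG l s a b c d v = 0"
    unfolding toS_fmul f1 f2 f7 f8 fc fa GG_def
    by (subst ring_fact[symmetric]) (simp add: mult.assoc)
  also have "\<dots> \<longleftrightarrow> GG l s a b c d v = 0"
    by (simp add: Z1_def)
  finally show ?thesis .
qed

definition XX :: "nat \<Rightarrow> int \<Rightarrow> params \<Rightarrow> complex" where
  "XX n i p = (case p of (l, s, a, b, c, d) \<Rightarrow>
     if 1 \<le> n \<and> i \<le> int n then co (UU l s a b c d) (n - 1) (nat (int n - i)) else 0)"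

lemma toS_XX: "toS (\<lambda>n i. XX n i (l, s, a, b, c, d)) = Z1 * UU l s a b c d"
  by (rule ser_eqI) (auto simp: XX_def co_mult_Z1)

lemma ansatz_XX: "ansatz (\<lambda>n i. XX n i (l, s, a, b, c, d))"
  by (simp add: ansatz_def XX_def)

lemma XX_11: "XX 1 1 (l, s, a, b, c, d) = 1"
  by (simp add: XX_def UU_00)

lemma ansatz_toS:
  assumes "ansatz y"
  shows "toS y = Z1 * mk (\<lambda>k m. co (toS y) (k + 1) m)"
proof (rule ser_eqI)
  fix k m
  show "co (toS y) k m = co (Z1 * mk (\<lambda>k m. co (toS y) (k + 1) m)) k m"
    unfolding co_mult_Z1 using assms by (cases k) (auto simp: ansatz_def)
qed

lemma supp_ansatz: "ansatz y \<Longrightarrow> supp y"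
  by (simp add: ansatz_def supp_def)

lemma regular_regp: "(l, s, a, b, c, d) \<in> regular_params \<longleftrightarrow> regp l s a b c d"
  by (simp add: regular_params_def regp_def)

lemma alg_part:
  assumes "(l, s, a, b, c, d) \<in> regular_params"
  shows "ansatz (\<lambda>n i. XX n i (l, s, a, b, c, d)) \<and> XX 1 1 (l, s, a, b, c, d) = 1 \<and>
        qPA1_sol l s a b c d (\<lambda>n i. XX n i (l, s, a, b, c, d)) \<and>
        (\<forall>y. ansatz y \<and> y 1 1 = 1 \<and> qPA1_sol l s a b c d y \<longrightarrow>
             y = (\<lambda>n i. XX n i (l, s, a, b, c, d)))"
proof -
  have r: "regp l s a b c d" using assms regular_regp by blast
  then have nz: "l \<noteq> 0" "s \<noteq> 0" by (auto simp: regp_def)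
  have sol: "qPA1_sol l s a b c d (\<lambda>n i. XX n i (l, s, a, b, c, d))"
    using qPA1_series[OF nz toS_XX] UU_sol[OF r] by simp
  have uniq: "y = (\<lambda>n i. XX n i (l, s, a, b, c, d))"
    if y: "ansatz y" "y 1 1 = 1" "qPA1_sol l s a b c d y" for y
  proof -
    define v where "v = mk (\<lambda>k m. co (toS y) (k + 1) m)"
    have tv: "toS y = Z1 * v" unfolding v_def by (rule ansatz_toS[OF y(1)])
    have "GG l s a b c d v = 0" using qPA1_series[OF nz tv] y(3) by simp
    moreover have "co v 0 0 = 1" using y(2) by (simp add: v_def)
    ultimately have "v = UU l s a b c d" using sol_unique[OF r] by simp
    then have "toS y = toS (\<lambda>n i. XX n i (l, s, a, b, c, d))" using tv toS_XX by simp
    then show ?thesis using toS_inj supp_ansatz y(1) ansatz_XX by blast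
  qed
  show ?thesis using ansatz_XX XX_11 sol uniq by blast
qed

abbreviation rr where "rr f \<equiv> rational_regular_on f regular_params"

lemma rr_cong: "rr f \<Longrightarrow> (\<And>p. p \<in> regular_params \<Longrightarrow> f p = g p) \<Longrightarrow> rr g"
  unfolding rational_regular_on_def by metis

lemma rr_poly: "poly6 f \<Longrightarrow> rr f"
  unfolding rational_regular_on_def
  by (rule exI[of _ f], rule exI[of _ "\<lambda>_. 1"]) (auto intro: poly6.const)

lemma rr_const: "rr (\<lambda>_. c)"
  by (rule rr_poly) (rule poly6.const)

lemma rr_add: "rr f \<Longrightarrow> rr g \<Longrightarrow> rr (\<lambda>p. f p + g p)"
  unfolding rational_regular_on_def
proof (elim exE conjE)
  fix P Q P' Q' assume h: "poly6 P" "poly6 Q" "\<forall>p\<in>regular_params. Q p \<noteq> 0 \<and> f p = P p / Q p"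
    "poly6 P'" "poly6 Q'" "\<forall>p\<in>regular_params. Q' p \<noteq> 0 \<and> g p = P' p / Q' p"
  show "\<exists>P Q. poly6 P \<and> poly6 Q \<and> (\<forall>p\<in>regular_params. Q p \<noteq> 0 \<and> f p + g p = P p / Q p)"
    by (rule exI[of _ "\<lambda>p. P p * Q' p + P' p * Q p"], rule exI[of _ "\<lambda>p. Q p * Q' p"])
       (use h in \<open>auto intro!: poly6.add poly6.mult simp: field_simps\<close>)
qed

lemma rr_mult: "rr f \<Longrightarrow> rr g \<Longrightarrow> rr (\<lambda>p. f p * g p)"
  unfolding rational_regular_on_def
proof (elim exE conjE)
  fix P Q P' Q' assume h: "poly6 P" "poly6 Q" "\<forall>p\<in>regular_params. Q p \<noteq> 0 \<and> f p = P p / Q p"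
    "poly6 P'" "poly6 Q'" "\<forall>p\<in>regular_params. Q' p \<noteq> 0 \<and> g p = P' p / Q' p"
  show "\<exists>P Q. poly6 P \<and> poly6 Q \<and> (\<forall>p\<in>regular_params. Q p \<noteq> 0 \<and> f p * g p = P p / Q p)"
    by (rule exI[of _ "\<lambda>p. P p * P' p"], rule exI[of _ "\<lambda>p. Q p * Q' p"])
       (use h in \<open>auto intro!: poly6.mult simp: field_simps\<close>)
qed

lemma rr_div: "rr f \<Longrightarrow> rr g \<Longrightarrow> (\<And>p. p \<in> regular_params \<Longrightarrow> g p \<noteq> 0) \<Longrightarrow> rr (\<lambda>p. f p / g p)"
  unfolding rational_regular_on_def
proof (elim exE conjE)
  fix P Q P' Q' assume h: "poly6 P" "poly6 Q" "\<forall>p\<in>regular_params. Q p \<noteq> 0 \<and> f p = P p / Q p"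
    "poly6 P'" "poly6 Q'" "\<forall>p\<in>regular_params. Q' p \<noteq> 0 \<and> g p = P' p / Q' p"
    and nz: "\<And>p. p \<in> regular_params \<Longrightarrow> g p \<noteq> 0"
  show "\<exists>P Q. poly6 P \<and> poly6 Q \<and> (\<forall>p\<in>regular_params. Q p \<noteq> 0 \<and> f p / g p = P p / Q p)"
  proof (rule exI[of _ "\<lambda>p. P p * Q' p"], rule exI[of _ "\<lambda>p. Q p * P' p"], intro conjI ballI)
    show "poly6 (\<lambda>p. P p * Q' p)" "poly6 (\<lambda>p. Q p * P' p)" using h by (auto intro!: poly6.mult)
  next
    fix p assume p: "p \<in> regular_params"
    then have "P' p \<noteq> 0" using h(6) nz[OF p] by auto
    then show "Q p * P' p \<noteq> 0" using h(3) p by auto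
    show "f p / g p = P p * Q' p / (Q p * P' p)" using h p by (simp add: field_simps)
  qed
qed

lemma rr_neg: "rr f \<Longrightarrow> rr (\<lambda>p. - f p)"
  using rr_mult[OF rr_const[of "-1"]] by simp

lemma rr_diff: "rr f \<Longrightarrow> rr g \<Longrightarrow> rr (\<lambda>p. f p - g p)"
  using rr_add[OF _ rr_neg] by simp

lemma rr_power: "rr f \<Longrightarrow> rr (\<lambda>p. f p ^ n)"
  by (induction n) (auto intro: rr_const rr_mult)

lemma rr_sum: "finite A \<Longrightarrow> (\<And>i. i \<in> A \<Longrightarrow> rr (f i)) \<Longrightarrow> rr (\<lambda>p. \<Sum>i\<in>A. f i p)"
  by (induction A rule: finite_induct) (auto intro: rr_const rr_add)

lemma rr_if: "rr f \<Longrightarrow> rr g \<Longrightarrow> rr (\<lambda>p. if P then f p else g p)"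
  by (cases P) auto

definition pl :: "params \<Rightarrow> complex" where "pl p = fst p"
definition ps :: "params \<Rightarrow> complex" where "ps p = fst (snd p)"
definition pa :: "params \<Rightarrow> complex" where "pa p = fst (snd (snd p))"
definition pb :: "params \<Rightarrow> complex" where "pb p = fst (snd (snd (snd p)))"
definition pc :: "params \<Rightarrow> complex" where "pc p = fst (snd (snd (snd (snd p))))"
definition pd :: "params \<Rightarrow> complex" where "pd p = snd (snd (snd (snd (snd p))))"

lemma rr_proj: "rr pl" "rr ps" "rr pa" "rr pb" "rr pc" "rr pd"
proof -
  have e: "pl = (\<lambda>(l, s, a, b, c, d). l)" "ps = (\<lambda>(l, s, a, b, c, d). s)"
    "pa = (\<lambda>(l, s, a, b, c, d). a)" "pb = (\<lambda>(l, s, a, b, c, d). b)"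
    "pc = (\<lambda>(l, s, a, b, c, d). c)" "pd = (\<lambda>(l, s, a, b, c, d). d)"
    by (auto simp: pl_def ps_def pa_def pb_def pc_def pd_def fun_eq_iff)
  show "rr pl" unfolding e(1) by (rule rr_poly, rule poly6.p1)
  show "rr ps" unfolding e(2) by (rule rr_poly, rule poly6.p2)
  show "rr pa" unfolding e(3) by (rule rr_poly, rule poly6.p3)
  show "rr pb" unfolding e(4) by (rule rr_poly, rule poly6.p4)
  show "rr pc" unfolding e(5) by (rule rr_poly, rule poly6.p5)
  show "rr pd" unfolding e(6) by (rule rr_poly, rule poly6.p6)
qed

lemma reg_nz:
  assumes "p \<in> regular_params"
  shows "pl p \<noteq> 0" "ps p \<noteq> 0" "pa p \<noteq> 0" "pb p \<noteq> 0" "pc p \<noteq> 0" "pd p \<noteq> 0"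
    "regp (pl p) (ps p) (pa p) (pb p) (pc p) (pd p)"
  using assms by (auto simp: regular_params_def pl_def ps_def pa_def pb_def pc_def pd_def regp_def)

lemma rr_inv:
  assumes "rr f" "\<And>p. p \<in> regular_params \<Longrightarrow> f p \<noteq> 0"
  shows "rr (\<lambda>p. inverse (f p))"
  using rr_div[OF rr_const[of 1] assms] by (simp add: inverse_eq_divide)

lemmas rr_intros = rr_const rr_add rr_mult rr_diff rr_neg rr_power rr_proj

definition RS :: "(params \<Rightarrow> ser) \<Rightarrow> bool" where
  "RS F \<longleftrightarrow> (\<forall>k m. rr (\<lambda>p. co (F p) k m))"

lemma RS_mult: "RS F \<Longrightarrow> RS G \<Longrightarrow> RS (\<lambda>p. F p * G p)"
  unfolding RS_def co_mult by (auto intro!: rr_sum rr_mult)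

lemma RS_add: "RS F \<Longrightarrow> RS G \<Longrightarrow> RS (\<lambda>p. F p + G p)"
  unfolding RS_def by (auto intro!: rr_add)

lemma RS_diff: "RS F \<Longrightarrow> RS G \<Longrightarrow> RS (\<lambda>p. F p - G p)"
  unfolding RS_def by (auto intro!: rr_diff)

lemma RS_const: "RS (\<lambda>_. f)"
  unfolding RS_def by (auto intro!: rr_const)

lemma RS_power: "RS F \<Longrightarrow> RS (\<lambda>p. F p ^ n)"
  by (induction n) (auto intro: RS_const RS_mult)

lemma RS_cst: "rr f \<Longrightarrow> RS (\<lambda>p. cst (f p))"
  unfolding RS_def co_cst by (auto intro!: rr_if rr_const)

lemma RS_scal: "rr f \<Longrightarrow> rr g \<Longrightarrow> RS F \<Longrightarrow> RS (\<lambda>p. scal (f p) (g p) (F p))"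
  unfolding RS_def co_scal by (auto intro!: rr_mult rr_power)

lemma rr_sl: "rr (\<lambda>p. ps p * pl p)" by (intro rr_intros)
lemma rr_inv_sl: "rr (\<lambda>p. inverse (ps p * pl p))"
  by (rule rr_inv[OF rr_sl]) (auto dest: reg_nz)
lemma rr_inv_l: "rr (\<lambda>p. inverse (pl p))"
  by (rule rr_inv[OF rr_proj(1)]) (auto dest: reg_nz)
lemma rr_inv_s: "rr (\<lambda>p. inverse (ps p))"
  by (rule rr_inv[OF rr_proj(2)]) (auto dest: reg_nz)
lemma rr_inv_a: "rr (\<lambda>p. inverse (pa p))"
  by (rule rr_inv[OF rr_proj(3)]) (auto dest: reg_nz)
lemma rr_inv_b: "rr (\<lambda>p. inverse (pb p))"
  by (rule rr_inv[OF rr_proj(4)]) (auto dest: reg_nz)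
lemma rr_inv_c: "rr (\<lambda>p. inverse (pc p))"
  by (rule rr_inv[OF rr_proj(5)]) (auto dest: reg_nz)
lemma rr_inv_d: "rr (\<lambda>p. inverse (pd p))"
  by (rule rr_inv[OF rr_proj(6)]) (auto dest: reg_nz)

lemma RS_GG:
  assumes "RS V"
  shows "RS (\<lambda>p. GG (pl p) (ps p) (pa p) (pb p) (pc p) (pd p) (V p))"
  unfolding GG_def
  by (intro RS_mult RS_add RS_diff RS_const RS_power RS_cst RS_scal assms rr_sl rr_inv_sl rr_inv_l
      rr_inv_s rr_inv_a rr_inv_b rr_inv_c rr_inv_d rr_proj)

lemma rr_Lc:
  "rr (\<lambda>p. Lc (pl p) (ps p) k m)"
  unfolding Lc_def
  by (intro rr_diff rr_add rr_const rr_mult rr_power rr_sl rr_inv_l rr_inv)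
     (auto dest: reg_nz)

lemma RS_tab: "RS (\<lambda>p. tab (pl p) (ps p) (pa p) (pb p) (pc p) (pd p) D)"
proof (induction D)
  case 0
  then show ?case by (simp add: RS_const)
next
  case (Suc D)
  show ?case
    unfolding RS_def tab.simps co_mk
  proof (intro allI)
    fix k m
    show "rr (\<lambda>p. if k + m \<le> D then co (tab (pl p) (ps p) (pa p) (pb p) (pc p) (pd p) D) k m
        else if k + m = Suc D then - co (GG (pl p) (ps p) (pa p) (pb p) (pc p) (pd p)
           (tab (pl p) (ps p) (pa p) (pb p) (pc p) (pd p) D)) k m / Lc (pl p) (ps p) k m else 0)"
    proof (cases "k + m \<le> D")
      case True then show ?thesis using Suc unfolding RS_def by simp
    next
      case False
      show ?thesis
      proof (cases "k + m = Suc D")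
        case True
        then have km: "(k, m) \<noteq> (0, 0)" by auto
        have "rr (\<lambda>p. - co (GG (pl p) (ps p) (pa p) (pb p) (pc p) (pd p)
           (tab (pl p) (ps p) (pa p) (pb p) (pc p) (pd p) D)) k m / Lc (pl p) (ps p) k m)"
        proof (intro rr_div rr_neg rr_Lc)
          show "rr (\<lambda>p. co (GG (pl p) (ps p) (pa p) (pb p) (pc p) (pd p)
           (tab (pl p) (ps p) (pa p) (pb p) (pc p) (pd p) D)) k m)"
            using RS_GG[OF Suc] unfolding RS_def by blast
          fix p assume "p \<in> regular_params"
          from reg_nz(7)[OF this] show "Lc (pl p) (ps p) k m \<noteq> 0"
            using Lc_nz km by (auto simp: regp_def)
        qed
        then show ?thesis using False True by simp
      next
        case False2: False
        then show ?thesis using False by (simp add: rr_const)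
      qed
    qed
  qed
qed

lemma rr_XX: "rr (XX n i)"
proof -
  have eq: "XX n i p = (if 1 \<le> n \<and> i \<le> int n then
     co (tab (pl p) (ps p) (pa p) (pb p) (pc p) (pd p) (n - 1 + nat (int n - i))) (n - 1) (nat (int n - i)) else 0)" for p
    by (cases p) (simp add: XX_def UU_def pl_def ps_def pa_def pb_def pc_def pd_def)
  show ?thesis
    unfolding eq by (rule rr_if) (use RS_tab in \<open>auto simp: RS_def intro: rr_const\<close>)
qed

definition nrm :: "real \<Rightarrow> nat \<Rightarrow> ser \<Rightarrow> real" where
  "nrm r n f = (\<Sum>k\<le>n. \<Sum>m\<le>n. cmod (co f k m) * r ^ (k + m))"

lemma nrm_nonneg: "0 \<le> r \<Longrightarrow> 0 \<le> nrm r n f"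
  unfolding nrm_def by (intro sum_nonneg mult_nonneg_nonneg) auto

lemma nrm_add: "0 \<le> r \<Longrightarrow> nrm r n (f + g) \<le> nrm r n f + nrm r n g"
  unfolding nrm_def co_add sum.distrib[symmetric] distrib_right[symmetric]
  by (intro sum_mono mult_right_mono norm_triangle_ineq) auto

lemma nrm_minus: "nrm r n (- f) = nrm r n f"
  by (simp add: nrm_def)

lemma nrm_diff: "0 \<le> r \<Longrightarrow> nrm r n (f - g) \<le> nrm r n f + nrm r n g"
  using nrm_add[of r n f "- g"] by (simp add: nrm_minus)

lemma nrm_cst_mult: "nrm r n (cst c * f) = cmod c * nrm r n f"
  by (simp add: nrm_def norm_mult sum_distrib_left mult.assoc)

lemma sum2_delta: "(\<Sum>k\<le>(n::nat). \<Sum>m\<le>n. if k = a \<and> m = b then x else 0) = (if a \<le> n \<and> b \<le> n then x else (0::real))"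
proof -
  have "(\<Sum>m\<le>n. if k = a \<and> m = b then x else 0) = (if k = a then (if b \<le> n then x else 0) else 0)" for k
    by (cases "k = a") (simp_all add: sum.delta)
  then show ?thesis by (simp add: sum.delta)
qed

lemma nrm_cst: "nrm r n (cst c) = cmod c"
proof -
  have "nrm r n (cst c) = (\<Sum>k\<le>n. \<Sum>m\<le>n. if k = 0 \<and> m = 0 then cmod c else 0)"
    unfolding nrm_def co_cst by (intro sum.cong refl) auto
  then show ?thesis by (simp add: sum2_delta)
qed

lemma nrm_1: "nrm r n 1 = 1"
  using nrm_cst[of r n 1] by simp

lemma nrm_Z1: "0 \<le> r \<Longrightarrow> nrm r n Z1 \<le> r"
proof -
  have "nrm r n Z1 = (\<Sum>k\<le>n. \<Sum>m\<le>n. if k = 1 \<and> m = 0 then r else 0)"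
    unfolding nrm_def co_Z1 by (intro sum.cong refl) auto
  then show "0 \<le> r \<Longrightarrow> ?thesis" by (simp add: sum2_delta)
qed

lemma nrm_Z2: "0 \<le> r \<Longrightarrow> nrm r n Z2 \<le> r"
proof -
  have "nrm r n Z2 = (\<Sum>k\<le>n. \<Sum>m\<le>n. if k = 0 \<and> m = 1 then r else 0)"
    unfolding nrm_def co_Z2 by (intro sum.cong refl) auto
  then show "0 \<le> r \<Longrightarrow> ?thesis" by (simp add: sum2_delta)
qed

lemma nrm_scal:
  assumes "0 \<le> r" "cmod q1 \<le> 1" "cmod q2 \<le> 1"
  shows "nrm r n (scal q1 q2 f) \<le> nrm r n f"
  unfolding nrm_def co_scal
proof (intro sum_mono)
  fix k m
  have "cmod (q1 ^ k * q2 ^ m * co f k m) = cmod q1 ^ k * cmod q2 ^ m * cmod (co f k m)"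
    by (simp add: norm_mult norm_power)
  also have "\<dots> \<le> 1 * 1 * cmod (co f k m)"
    using assms by (intro mult_right_mono mult_mono power_le_one) auto
  finally show "cmod (q1 ^ k * q2 ^ m * co f k m) * r ^ (k + m) \<le> cmod (co f k m) * r ^ (k + m)"
    using assms by (intro mult_right_mono) auto
qed

lemma conv_bound_1d:
  fixes a b :: "nat \<Rightarrow> real"
  assumes "\<And>i. 0 \<le> a i" "\<And>i. 0 \<le> b i"
  shows "(\<Sum>k\<le>n. \<Sum>i\<le>k. a i * b (k - i)) \<le> (\<Sum>i\<le>n. a i) * (\<Sum>j\<le>n. b j)"
proof -
  have "(\<Sum>k\<le>n. \<Sum>i\<le>k. a i * b (k - i)) = (\<Sum>(i, j)\<in>{(i, j). i + j \<le> n}. a i * b j)"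
    by (rule sum.triangle_reindex_eq[symmetric])
  also have "\<dots> \<le> (\<Sum>(i, j)\<in>{..n} \<times> {..n}. a i * b j)"
    by (rule sum_mono2) (auto intro: mult_nonneg_nonneg assms)
  also have "\<dots> = (\<Sum>i\<le>n. a i) * (\<Sum>j\<le>n. b j)"
    by (simp add: sum_product sum.cartesian_product)
  finally show ?thesis .
qed

lemma nrm_mult:
  assumes r: "0 \<le> r"
  shows "nrm r n (f * g) \<le> nrm r n f * nrm r n g"
proof -
  define A where "A i j = cmod (co f i j) * r ^ (i + j)" for i j
  define B where "B i j = cmod (co g i j) * r ^ (i + j)" for i j
  have A0: "0 \<le> A i j" and B0: "0 \<le> B i j" for i j using r by (auto simp: A_def B_def)
  have "nrm r n (f * g) \<le> (\<Sum>k\<le>n. \<Sum>m\<le>n. \<Sum>i\<le>k. \<Sum>j\<le>m. A i j * B (k - i) (m - j))"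
    unfolding nrm_def co_mult
  proof (intro sum_mono)
    fix k m assume "k \<in> {..n}" "m \<in> {..n}"
    have "cmod (\<Sum>i\<le>k. \<Sum>j\<le>m. co f i j * co g (k - i) (m - j)) * r ^ (k + m)
      \<le> (\<Sum>i\<le>k. \<Sum>j\<le>m. cmod (co f i j) * cmod (co g (k - i) (m - j))) * r ^ (k + m)"
      using r by (intro mult_right_mono order.trans[OF norm_sum] sum_mono) (auto simp: norm_mult intro!: order.trans[OF norm_sum])
    also have "\<dots> = (\<Sum>i\<le>k. \<Sum>j\<le>m. A i j * B (k - i) (m - j))"
      unfolding sum_distrib_right A_def B_def
      by (intro sum.cong refl) (auto simp: power_add[symmetric] mult_ac)
    finally show "cmod (\<Sum>i\<le>k. \<Sum>j\<le>m. co f i j * co g (k - i) (m - j)) * r ^ (k + m)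
      \<le> (\<Sum>i\<le>k. \<Sum>j\<le>m. A i j * B (k - i) (m - j))" .
  qed
  also have "\<dots> = (\<Sum>k\<le>n. \<Sum>i\<le>k. \<Sum>m\<le>n. \<Sum>j\<le>m. A i j * B (k - i) (m - j))"
    by (intro sum.cong refl sum.swap)
  also have "\<dots> \<le> (\<Sum>k\<le>n. \<Sum>i\<le>k. (\<Sum>j\<le>n. A i j) * (\<Sum>j\<le>n. B (k - i) j))"
    by (intro sum_mono conv_bound_1d A0 B0)
  also have "\<dots> \<le> (\<Sum>i\<le>n. \<Sum>j\<le>n. A i j) * (\<Sum>i\<le>n. \<Sum>j\<le>n. B i j)"
    by (rule conv_bound_1d) (auto intro: sum_nonneg A0 B0)
  also have "\<dots> = nrm r n f * nrm r n g"
    by (simp add: nrm_def A_def B_def)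
  finally show ?thesis .
qed

lemma cst_uminus: "cst (- a) = - cst a"
  by (rule ser_eqI) (simp add: co_cst)

definition Lmap :: "complex \<Rightarrow> complex \<Rightarrow> complex \<Rightarrow> complex \<Rightarrow> complex \<Rightarrow> ser \<Rightarrow> ser" where
  "Lmap q1 q2 a0 a1 a2 w = cst a0 * w + cst a1 * scal q1 q2 w + cst a2 * scal (q1 * q1) (q2 * q2) w"

definition ctrl :: "real \<Rightarrow> complex \<Rightarrow> complex \<Rightarrow> (ser \<Rightarrow> ser) \<Rightarrow> complex \<Rightarrow> real \<Rightarrow> real \<Rightarrow> real \<Rightarrow> real
   \<Rightarrow> complex \<Rightarrow> complex \<Rightarrow> complex \<Rightarrow> bool" where
  "ctrl r q1 q2 e c C l s g a0 a1 a2 \<longleftrightarrow>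
     cmod c \<le> C \<and> cmod a0 + cmod a1 + cmod a2 \<le> l \<and> 0 \<le> s \<and> 0 \<le> g \<and>
     (\<forall>n. nrm r n (e 0 - cst c) \<le> s * r) \<and>
     (\<forall>w n. nrm r n w \<le> 1 \<longrightarrow>
        nrm r n (e w - e 0 - Lmap q1 q2 a0 a1 a2 w) \<le> g * (r * nrm r n w + (nrm r n w)^2))"

locale rq =
  fixes r :: real and q1 q2 :: complex
  assumes r0: "0 \<le> r" and r1: "r \<le> 1" and q1: "cmod q1 \<le> 1" and q2: "cmod q2 \<le> 1"
begin

lemma nrm_Lmap: "nrm r n (Lmap q1 q2 a0 a1 a2 w) \<le> (cmod a0 + cmod a1 + cmod a2) * nrm r n w"
proof -
  have qq: "cmod (q1 * q1) \<le> 1" "cmod (q2 * q2) \<le> 1"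
    using q1 q2 by (auto simp: norm_mult intro: mult_le_one)
  have "nrm r n (Lmap q1 q2 a0 a1 a2 w) \<le> nrm r n (cst a0 * w) + nrm r n (cst a1 * scal q1 q2 w)
     + nrm r n (cst a2 * scal (q1 * q1) (q2 * q2) w)"
    unfolding Lmap_def using r0 by (meson add_mono nrm_add order_trans order_refl)
  also have "\<dots> \<le> cmod a0 * nrm r n w + cmod a1 * nrm r n w + cmod a2 * nrm r n w"
    unfolding nrm_cst_mult
    by (intro add_mono mult_left_mono nrm_scal r0 q1 q2 qq) auto
  finally show ?thesis by (simp add: algebra_simps)
qed

lemma ctrl_cst: "cmod k \<le> C \<Longrightarrow> ctrl r q1 q2 (\<lambda>w. cst k) k C 0 0 0 0 0 0"
  unfolding ctrl_def Lmap_def by (simp add: nrm_def)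

lemma ctrl_one: "ctrl r q1 q2 (\<lambda>w. 1) 1 1 0 0 0 0 0 0"
  using ctrl_cst[of 1 1] by simp

lemma ctrl_Z1: "ctrl r q1 q2 (\<lambda>w. Z1) 0 0 0 1 0 0 0 0"
  unfolding ctrl_def Lmap_def using nrm_Z1[OF r0] by (simp add: nrm_def)

lemma ctrl_Z2: "ctrl r q1 q2 (\<lambda>w. Z2) 0 0 0 1 0 0 0 0"
  unfolding ctrl_def Lmap_def using nrm_Z2[OF r0] by (simp add: nrm_def)

lemma ctrl_v: "ctrl r q1 q2 (\<lambda>w. 1 + w) 1 1 1 0 0 1 0 0"
  unfolding ctrl_def Lmap_def by (simp add: nrm_def)

lemma ctrl_vh: "ctrl r q1 q2 (\<lambda>w. scal q1 q2 (1 + w)) 1 1 1 0 0 0 1 0"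
  unfolding ctrl_def Lmap_def by (simp add: nrm_def scal_add scal_1)

lemma ctrl_vhh: "ctrl r q1 q2 (\<lambda>w. scal (q1 * q1) (q2 * q2) (1 + w)) 1 1 1 0 0 0 0 1"
  unfolding ctrl_def Lmap_def by (simp add: nrm_def scal_add scal_1)

lemma Lmap_add: "Lmap q1 q2 (a0 + b0) (a1 + b1) (a2 + b2) w = Lmap q1 q2 a0 a1 a2 w + Lmap q1 q2 b0 b1 b2 w"
  by (simp add: Lmap_def cst_add algebra_simps)
lemma Lmap_diff: "Lmap q1 q2 (a0 - b0) (a1 - b1) (a2 - b2) w = Lmap q1 q2 a0 a1 a2 w - Lmap q1 q2 b0 b1 b2 w"
  by (simp add: Lmap_def cst_diff algebra_simps)
lemma Lmap_comb: "Lmap q1 q2 (c1 * b0 + c2 * a0) (c1 * b1 + c2 * a1) (c1 * b2 + c2 * a2) w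
   = cst c1 * Lmap q1 q2 b0 b1 b2 w + cst c2 * Lmap q1 q2 a0 a1 a2 w"
  by (simp add: Lmap_def cst_add cst_mult algebra_simps)

lemma ctrl_add:
  assumes "ctrl r q1 q2 e1 c1 C1 l1 s1 g1 a0 a1 a2" "ctrl r q1 q2 e2 c2 C2 l2 s2 g2 b0 b1 b2"
  shows "ctrl r q1 q2 (\<lambda>w. e1 w + e2 w) (c1 + c2) (C1 + C2) (l1 + l2) (s1 + s2) (g1 + g2)
     (a0 + b0) (a1 + b1) (a2 + b2)"
  unfolding ctrl_def
proof (intro conjI allI impI)
  note A = assms[unfolded ctrl_def]
  show "cmod (c1 + c2) \<le> C1 + C2" using A by (meson add_mono norm_triangle_le)
  show "cmod (a0 + b0) + cmod (a1 + b1) + cmod (a2 + b2) \<le> l1 + l2"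
    using A norm_triangle_ineq[of a0 b0] norm_triangle_ineq[of a1 b1] norm_triangle_ineq[of a2 b2] by linarith
  show "0 \<le> s1 + s2" "0 \<le> g1 + g2" using A by auto
  fix n
  have "nrm r n (e1 0 + e2 0 - cst (c1 + c2)) \<le> nrm r n (e1 0 - cst c1) + nrm r n (e2 0 - cst c2)"
    using nrm_add[OF r0, of n "e1 0 - cst c1" "e2 0 - cst c2"] by (simp add: cst_add algebra_simps)
  also have "\<dots> \<le> s1 * r + s2 * r" using A by (intro add_mono) auto
  finally show "nrm r n (e1 0 + e2 0 - cst (c1 + c2)) \<le> (s1 + s2) * r" by (simp add: algebra_simps)
next
  note A = assms[unfolded ctrl_def]
  fix w n assume w: "nrm r n w \<le> 1"
  have "nrm r n (e1 w + e2 w - (e1 0 + e2 0) - Lmap q1 q2 (a0 + b0) (a1 + b1) (a2 + b2) w)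
     \<le> nrm r n (e1 w - e1 0 - Lmap q1 q2 a0 a1 a2 w) + nrm r n (e2 w - e2 0 - Lmap q1 q2 b0 b1 b2 w)"
    using nrm_add[OF r0, of n "e1 w - e1 0 - Lmap q1 q2 a0 a1 a2 w" "e2 w - e2 0 - Lmap q1 q2 b0 b1 b2 w"]
    by (simp add: Lmap_add algebra_simps)
  also have "\<dots> \<le> g1 * (r * nrm r n w + (nrm r n w)^2) + g2 * (r * nrm r n w + (nrm r n w)^2)"
    using A w by (intro add_mono) auto
  finally show "nrm r n (e1 w + e2 w - (e1 0 + e2 0) - Lmap q1 q2 (a0 + b0) (a1 + b1) (a2 + b2) w)
      \<le> (g1 + g2) * (r * nrm r n w + (nrm r n w)^2)" by (simp add: algebra_simps)
qed

lemma ctrl_neg: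
  assumes "ctrl r q1 q2 e c C l s g a0 a1 a2"
  shows "ctrl r q1 q2 (\<lambda>w. - e w) (- c) C l s g (- a0) (- a1) (- a2)"
proof -
  have L: "Lmap q1 q2 (- a0) (- a1) (- a2) w = - Lmap q1 q2 a0 a1 a2 w" for w
    by (simp add: Lmap_def cst_uminus)
  have m: "- e w - - e 0 - - Lmap q1 q2 a0 a1 a2 w = - (e w - e 0 - Lmap q1 q2 a0 a1 a2 w)" for w
    by simp
  have m2: "- e 0 - cst (- c) = - (e 0 - cst c)" by (simp add: cst_def)
  show ?thesis using assms unfolding ctrl_def L m m2 nrm_minus by simp
qed

lemma ctrl_diff:
  assumes "ctrl r q1 q2 e1 c1 C1 l1 s1 g1 a0 a1 a2" "ctrl r q1 q2 e2 c2 C2 l2 s2 g2 b0 b1 b2"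
  shows "ctrl r q1 q2 (\<lambda>w. e1 w - e2 w) (c1 - c2) (C1 + C2) (l1 + l2) (s1 + s2) (g1 + g2)
     (a0 - b0) (a1 - b1) (a2 - b2)"
  using ctrl_add[OF assms(1) ctrl_neg[OF assms(2)]] by simp

lemma ctrl_mult:
  assumes c1: "ctrl r q1 q2 e1 c1 C1 l1 s1 g1 a0 a1 a2" and c2: "ctrl r q1 q2 e2 c2 C2 l2 s2 g2 b0 b1 b2"
  shows "ctrl r q1 q2 (\<lambda>w. e1 w * e2 w) (c1 * c2) (C1 * C2) (C1 * l2 + C2 * l1)
     (C1 * s2 + s1 * C2 + s1 * s2)
     (s1 * l2 + (C1 + s1) * g2 + l1 * s2 + l1 * l2 + l1 * g2 + g1 * (C2 + s2 + l2 + 2 * g2))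
     (c1 * b0 + c2 * a0) (c1 * b1 + c2 * a1) (c1 * b2 + c2 * a2)"
proof -
  have C1': "cmod c1 \<le> C1" and l1': "cmod a0 + cmod a1 + cmod a2 \<le> l1" and s1: "0 \<le> s1" and g1: "0 \<le> g1"
    and A5: "\<And>n. nrm r n (e1 0 - cst c1) \<le> s1 * r"
    and A6: "\<And>w n. nrm r n w \<le> 1 \<Longrightarrow> nrm r n (e1 w - e1 0 - Lmap q1 q2 a0 a1 a2 w) \<le> g1 * (r * nrm r n w + (nrm r n w)^2)"
    using c1 unfolding ctrl_def by simp_all
  have C2': "cmod c2 \<le> C2" and l2': "cmod b0 + cmod b1 + cmod b2 \<le> l2" and s2: "0 \<le> s2" and g2: "0 \<le> g2"
    and B5: "\<And>n. nrm r n (e2 0 - cst c2) \<le> s2 * r"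
    and B6: "\<And>w n. nrm r n w \<le> 1 \<Longrightarrow> nrm r n (e2 w - e2 0 - Lmap q1 q2 b0 b1 b2 w) \<le> g2 * (r * nrm r n w + (nrm r n w)^2)"
    using c2 unfolding ctrl_def by simp_all
  have C1: "0 \<le> C1" "cmod c1 \<le> C1" using order_trans[OF norm_ge_zero C1'] C1' by auto
  have C2: "0 \<le> C2" "cmod c2 \<le> C2" using order_trans[OF norm_ge_zero C2'] C2' by auto
  have l1: "0 \<le> l1" using l1' norm_ge_zero[of a0] norm_ge_zero[of a1] norm_ge_zero[of a2] by linarith
  have l2: "0 \<le> l2" using l2' norm_ge_zero[of b0] norm_ge_zero[of b1] norm_ge_zero[of b2] by linarith
  have s: "0 \<le> s1" "0 \<le> s2" "0 \<le> g1" "0 \<le> g2" using s1 s2 g1 g2 by auto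
  define S1 where "S1 = e1 0 - cst c1"
  define S2 where "S2 = e2 0 - cst c2"
  have nS1: "nrm r n S1 \<le> s1 * r" and nS2: "nrm r n S2 \<le> s2 * r" for n
    using A5 B5 by (auto simp: S1_def S2_def)
  have nS1': "nrm r n S1 \<le> s1" and nS2': "nrm r n S2 \<le> s2" for n
    using nS1[of n] nS2[of n] s r1 r0 mult_left_le[of r s1] mult_left_le[of r s2] by linarith+
  have nE1: "nrm r n (e1 0) \<le> C1 + s1" for n
  proof -
    have "nrm r n (e1 0) = nrm r n (cst c1 + S1)" by (simp add: S1_def)
    also have "\<dots> \<le> cmod c1 + s1" using nrm_add[OF r0, of n "cst c1" S1] nS1'[of n] by (simp add: nrm_cst)
    finally show ?thesis using C1 by simp
  qed
  have nE2: "nrm r n (e2 0) \<le> C2 + s2" for n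
  proof -
    have "nrm r n (e2 0) = nrm r n (cst c2 + S2)" by (simp add: S2_def)
    also have "\<dots> \<le> cmod c2 + s2" using nrm_add[OF r0, of n "cst c2" S2] nS2'[of n] by (simp add: nrm_cst)
    finally show ?thesis using C2 by simp
  qed
  show ?thesis
    unfolding ctrl_def
  proof (intro conjI allI impI)
    show "cmod (c1 * c2) \<le> C1 * C2" using C1 C2 by (simp add: norm_mult mult_mono)
    show "cmod (c1 * b0 + c2 * a0) + cmod (c1 * b1 + c2 * a1) + cmod (c1 * b2 + c2 * a2) \<le> C1 * l2 + C2 * l1"
    proof -
      have "cmod (c1 * b0 + c2 * a0) + cmod (c1 * b1 + c2 * a1) + cmod (c1 * b2 + c2 * a2)
          \<le> cmod c1 * (cmod b0 + cmod b1 + cmod b2) + cmod c2 * (cmod a0 + cmod a1 + cmod a2)"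
        using norm_triangle_ineq[of "c1 * b0" "c2 * a0"] norm_triangle_ineq[of "c1 * b1" "c2 * a1"]
          norm_triangle_ineq[of "c1 * b2" "c2 * a2"] by (simp add: norm_mult algebra_simps)
      also have "\<dots> \<le> C1 * l2 + C2 * l1"
        using l1' l2' C1 C2 by (intro add_mono mult_mono) auto
      finally show ?thesis .
    qed
    show "0 \<le> C1 * s2 + s1 * C2 + s1 * s2" using C1 C2 s by auto
    show "0 \<le> s1 * l2 + (C1 + s1) * g2 + l1 * s2 + l1 * l2 + l1 * g2 + g1 * (C2 + s2 + l2 + 2 * g2)"
      using C1 C2 s l1 l2 by auto
  next
    fix n
    have eqS: "e1 0 * e2 0 - cst (c1 * c2) = cst c1 * S2 + cst c2 * S1 + S1 * S2"
      by (simp add: S1_def S2_def cst_mult algebra_simps)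
    have "nrm r n (e1 0 * e2 0 - cst (c1 * c2)) \<le> nrm r n (cst c1 * S2) + nrm r n (cst c2 * S1) + nrm r n (S1 * S2)"
      unfolding eqS using nrm_add[OF r0, of n "cst c1 * S2 + cst c2 * S1" "S1 * S2"] nrm_add[OF r0, of n "cst c1 * S2" "cst c2 * S1"]
      by linarith
    also have "\<dots> \<le> C1 * (s2 * r) + C2 * (s1 * r) + (s1 * r) * (s2 * r)"
    proof -
      have "nrm r n (S1 * S2) \<le> (s1 * r) * (s2 * r)"
        using nrm_mult[OF r0, of n S1 S2] mult_mono[OF nS1[of n] nS2[of n]] nrm_nonneg[OF r0, of n S2] s r0
        by (meson mult_nonneg_nonneg order.trans)
      moreover have "cmod c1 * nrm r n S2 \<le> C1 * (s2 * r)"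
        using mult_mono[OF C1(2) nS2[of n]] C1 nrm_nonneg[OF r0] by simp
      moreover have "cmod c2 * nrm r n S1 \<le> C2 * (s1 * r)"
        using mult_mono[OF C2(2) nS1[of n]] C2 nrm_nonneg[OF r0] by simp
      ultimately show ?thesis using nrm_cst_mult[of r n c1 S2] nrm_cst_mult[of r n c2 S1] by linarith
    qed
    also have "\<dots> \<le> (C1 * s2 + s1 * C2 + s1 * s2) * r"
    proof -
      have "(s1 * r) * (s2 * r) \<le> (s1 * s2) * r"
        using mult_left_le_one_le[of "s1 * s2 * r" r] s r0 r1 by (simp add: mult_ac)
      then show ?thesis by (simp add: algebra_simps)
    qed
    finally show "nrm r n (e1 0 * e2 0 - cst (c1 * c2)) \<le> (C1 * s2 + s1 * C2 + s1 * s2) * r" .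
  next
    fix w n assume wle: "nrm r n w \<le> 1"
    define W where "W = nrm r n w"
    define X where "X = r * W + W ^ 2"
    have W0: "0 \<le> W" using nrm_nonneg[OF r0] by (simp add: W_def)
    have W1: "W \<le> 1" using wle by (simp add: W_def)
    have X0: "0 \<le> X" using W0 r0 by (simp add: X_def)
    have X2: "X \<le> 2" using W0 W1 r0 r1 unfolding X_def
      by (smt (verit) mult_le_one power_le_one)
    have rW: "r * W \<le> X" and WW: "W * W \<le> X" using W0 r0 by (auto simp: X_def power2_eq_square)
    have WX: "W * X \<le> X" using mult_left_le_one_le[OF X0 W0 W1] .
    define L1 where "L1 = Lmap q1 q2 a0 a1 a2 w"
    define L2 where "L2 = Lmap q1 q2 b0 b1 b2 w"
    define R1 where "R1 = e1 w - e1 0 - L1"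
    define R2 where "R2 = e2 w - e2 0 - L2"
    have nL1: "nrm r n L1 \<le> l1 * W" using nrm_Lmap[of n a0 a1 a2 w] mult_right_mono[OF l1' W0]
      unfolding L1_def W_def by linarith
    have nL2: "nrm r n L2 \<le> l2 * W" using nrm_Lmap[of n b0 b1 b2 w] mult_right_mono[OF l2' W0]
      unfolding L2_def W_def by linarith
    have nR1: "nrm r n R1 \<le> g1 * X" using A6[OF wle] unfolding R1_def L1_def X_def W_def .
    have nR2: "nrm r n R2 \<le> g2 * X" using B6[OF wle] unfolding R2_def L2_def X_def W_def .
    have eq: "e1 w * e2 w - e1 0 * e2 0 - Lmap q1 q2 (c1 * b0 + c2 * a0) (c1 * b1 + c2 * a1) (c1 * b2 + c2 * a2) w
       = S1 * L2 + e1 0 * R2 + L1 * S2 + L1 * L2 + L1 * R2 + R1 * (e2 0 + L2 + R2)"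
      unfolding Lmap_comb S1_def S2_def R1_def R2_def L1_def[symmetric] L2_def[symmetric]
      by (simp add: algebra_simps)
    have "nrm r n (S1 * L2 + e1 0 * R2 + L1 * S2 + L1 * L2 + L1 * R2 + R1 * (e2 0 + L2 + R2))
       \<le> nrm r n S1 * nrm r n L2 + nrm r n (e1 0) * nrm r n R2 + nrm r n L1 * nrm r n S2
         + nrm r n L1 * nrm r n L2 + nrm r n L1 * nrm r n R2
         + nrm r n R1 * (nrm r n (e2 0) + nrm r n L2 + nrm r n R2)"
    proof -
      have t: "nrm r n (f + g) \<le> nrm r n f + nrm r n g" for f g by (rule nrm_add[OF r0])
      have m: "nrm r n (f * g) \<le> nrm r n f * nrm r n g" for f g by (rule nrm_mult[OF r0])
      have p: "nrm r n (e2 0 + L2 + R2) \<le> nrm r n (e2 0) + nrm r n L2 + nrm r n R2"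
        using t[of "e2 0 + L2" R2] t[of "e2 0" L2] by linarith
      have q: "nrm r n (R1 * (e2 0 + L2 + R2)) \<le> nrm r n R1 * (nrm r n (e2 0) + nrm r n L2 + nrm r n R2)"
        using mult_left_mono[OF p nrm_nonneg[OF r0, of n R1]] m[of R1 "e2 0 + L2 + R2"] by linarith
      have "nrm r n (S1 * L2 + e1 0 * R2 + L1 * S2 + L1 * L2 + L1 * R2 + R1 * (e2 0 + L2 + R2))
        \<le> nrm r n (S1 * L2) + nrm r n (e1 0 * R2) + nrm r n (L1 * S2) + nrm r n (L1 * L2)
          + nrm r n (L1 * R2) + nrm r n (R1 * (e2 0 + L2 + R2))"
        using t[of "S1 * L2 + e1 0 * R2 + L1 * S2 + L1 * L2 + L1 * R2" "R1 * (e2 0 + L2 + R2)"]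
          t[of "S1 * L2 + e1 0 * R2 + L1 * S2 + L1 * L2" "L1 * R2"]
          t[of "S1 * L2 + e1 0 * R2 + L1 * S2" "L1 * L2"]
          t[of "S1 * L2 + e1 0 * R2" "L1 * S2"]
          t[of "S1 * L2" "e1 0 * R2"] by linarith
      also have "\<dots> \<le> nrm r n S1 * nrm r n L2 + nrm r n (e1 0) * nrm r n R2 + nrm r n L1 * nrm r n S2
         + nrm r n L1 * nrm r n L2 + nrm r n L1 * nrm r n R2
         + nrm r n R1 * (nrm r n (e2 0) + nrm r n L2 + nrm r n R2)"
        using m[of S1 L2] m[of "e1 0" R2] m[of L1 S2] m[of L1 L2] m[of L1 R2] q by linarith
      finally show ?thesis .
    qed
    also have "\<dots> \<le> (s1 * r) * (l2 * W) + (C1 + s1) * (g2 * X) + (l1 * W) * (s2 * r)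
         + (l1 * W) * (l2 * W) + (l1 * W) * (g2 * X) + (g1 * X) * ((C2 + s2) + l2 * W + g2 * X)"
    proof -
      have N: "\<And>f. 0 \<le> nrm r n f" using nrm_nonneg[OF r0] by blast
      have p1: "nrm r n S1 * nrm r n L2 \<le> (s1 * r) * (l2 * W)"
        using nS1[of n] nL2 N s l2 W0 r0 by (intro mult_mono) auto
      have p2: "nrm r n (e1 0) * nrm r n R2 \<le> (C1 + s1) * (g2 * X)"
        using nE1[of n] nR2 N s C1 X0 by (intro mult_mono) auto
      have p3: "nrm r n L1 * nrm r n S2 \<le> (l1 * W) * (s2 * r)"
        using nL1 nS2[of n] N s l1 W0 r0 by (intro mult_mono) auto
      have p4: "nrm r n L1 * nrm r n L2 \<le> (l1 * W) * (l2 * W)"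
        using nL1 nL2 N l1 l2 W0 by (intro mult_mono) auto
      have p5: "nrm r n L1 * nrm r n R2 \<le> (l1 * W) * (g2 * X)"
        using nL1 nR2 N l1 s W0 X0 by (intro mult_mono) auto
      have sum3: "nrm r n (e2 0) + nrm r n L2 + nrm r n R2 \<le> (C2 + s2) + l2 * W + g2 * X"
        using nE2[of n] nL2 nR2 by linarith
      have p6: "nrm r n R1 * (nrm r n (e2 0) + nrm r n L2 + nrm r n R2) \<le> (g1 * X) * ((C2 + s2) + l2 * W + g2 * X)"
        using nR1 sum3 N s X0 by (intro mult_mono) auto
      show ?thesis using p1 p2 p3 p4 p5 p6 by linarith
    qed
    also have "\<dots> \<le> (s1 * l2 + (C1 + s1) * g2 + l1 * s2 + l1 * l2 + l1 * g2 + g1 * (C2 + s2 + l2 + 2 * g2)) * X"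
    proof -
      have a: "(s1 * r) * (l2 * W) \<le> s1 * l2 * X"
        using mult_left_mono[OF rW mult_nonneg_nonneg[OF s(1) l2]] by (simp add: mult_ac)
      have b: "(l1 * W) * (s2 * r) \<le> l1 * s2 * X"
        using mult_left_mono[OF rW mult_nonneg_nonneg[OF l1 s(2)]] by (simp add: mult_ac)
      have c: "(l1 * W) * (l2 * W) \<le> l1 * l2 * X"
        using mult_left_mono[OF WW mult_nonneg_nonneg[OF l1 l2]] by (simp add: mult_ac)
      have d: "(l1 * W) * (g2 * X) \<le> l1 * g2 * X"
        using mult_left_mono[OF WX mult_nonneg_nonneg[OF l1 s(4)]] by (simp add: mult_ac)
      have e: "(g1 * X) * ((C2 + s2) + l2 * W + g2 * X) \<le> g1 * X * (C2 + s2 + l2 + 2 * g2)"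
      proof -
        have "l2 * W \<le> l2" using mult_right_le_one_le[OF l2 W0 W1] .
        moreover have "g2 * X \<le> 2 * g2" using mult_left_mono[OF X2 s(4)] by (simp add: mult.commute)
        ultimately have "(C2 + s2) + l2 * W + g2 * X \<le> C2 + s2 + l2 + 2 * g2" by linarith
        then show ?thesis using mult_left_mono[of _ _ "g1 * X"] s X0 by simp
      qed
      show ?thesis using a b c d e by (simp add: algebra_simps)
    qed
    finally show "nrm r n (e1 w * e2 w - e1 0 * e2 0 - Lmap q1 q2 (c1 * b0 + c2 * a0) (c1 * b1 + c2 * a1) (c1 * b2 + c2 * a2) w)
      \<le> (s1 * l2 + (C1 + s1) * g2 + l1 * s2 + l1 * l2 + l1 * g2 + g1 * (C2 + s2 + l2 + 2 * g2)) * (r * nrm r n w + (nrm r n w)^2)"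
      unfolding eq X_def W_def .
  qed
qed

end

definition GSx :: "complex \<Rightarrow> complex \<Rightarrow> complex \<Rightarrow> complex \<Rightarrow> complex \<Rightarrow> complex \<Rightarrow> complex \<Rightarrow> ser \<Rightarrow> ser" where
"GSx q1 q2 s a b c d v =
 (cst q1 * scal q1 q2 v * scal (q1 * q1) (q2 * q2) v - cst s * cst q2 * cst q2 * (Z2 * Z2)) *
 (cst (inverse q1) * scal q1 q2 v * v - cst (inverse s) * cst q2 * cst q2 * (Z2 * Z2)) *
 (cst q1 * Z1 * scal q1 q2 v - cst c) * (cst q1 * Z1 * scal q1 q2 v - cst (inverse c)) *
 (cst q1 * Z1 * scal q1 q2 v - cst d) * (cst q1 * Z1 * scal q1 q2 v - cst (inverse d))
 - (cst q1 * cst q1 * cst q1 * (Z1 * Z1) * scal q1 q2 v * scal (q1 * q1) (q2 * q2) v - 1) *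
   (cst (inverse q1) * cst q1 * cst q1 * (Z1 * Z1) * scal q1 q2 v * v - 1) *
   (scal q1 q2 v - cst a * cst q2 * Z2) * (scal q1 q2 v - cst (inverse a) * cst q2 * Z2) *
   (scal q1 q2 v - cst b * cst q2 * Z2) * (scal q1 q2 v - cst (inverse b) * cst q2 * Z2)"

lemma GS_eq:
  assumes "l \<noteq> 0" "s \<noteq> 0"
  shows "scal (s * l) (inverse l) (GG l s a b c d v) = GSx (s * l) (inverse l) s a b c d v"
proof -
  define q1 where "q1 = s * l"
  have i: "scal q1 (inverse l) (scal (inverse q1) l v) = v"
  proof -
    have "q1 \<noteq> 0" using assms by (simp add: q1_def)
    then have "q1 * inverse q1 = 1" by simp
    moreover have "inverse l * l = 1" using assms by simp
    ultimately show ?thesis by (simp add: scal_scal scal_11)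
  qed
  have ii: "scal q1 (inverse l) (scal q1 (inverse l) v) = scal (q1 * q1) (inverse l * inverse l) v"
    by (simp add: scal_scal)
  show ?thesis
    unfolding GG_def GSx_def q1_def[symmetric]
    apply (simp only: scal_mult scal_diff scal_cst scal_Z1 scal_Z2 scal_power scal_1 i ii)
    apply (simp add: power2_eq_square mult_ac)
    done
qed

schematic_goal (in rq) GSx_raw:
  assumes "cmod q1 \<le> M" "cmod (inverse q1) \<le> M" "cmod q2 \<le> M" "cmod s \<le> M" "cmod (inverse s) \<le> M"
    "cmod a \<le> M" "cmod (inverse a) \<le> M" "cmod b \<le> M" "cmod (inverse b) \<le> M"
    "cmod c \<le> M" "cmod (inverse c) \<le> M" "cmod d \<le> M" "cmod (inverse d) \<le> M"
  shows "ctrl r q1 q2 (\<lambda>w.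
 (cst q1 * scal q1 q2 (1 + w) * scal (q1 * q1) (q2 * q2) (1 + w) - cst s * cst q2 * cst q2 * (Z2 * Z2)) *
 (cst (inverse q1) * scal q1 q2 (1 + w) * (1 + w) - cst (inverse s) * cst q2 * cst q2 * (Z2 * Z2)) *
 (cst q1 * Z1 * scal q1 q2 (1 + w) - cst c) * (cst q1 * Z1 * scal q1 q2 (1 + w) - cst (inverse c)) *
 (cst q1 * Z1 * scal q1 q2 (1 + w) - cst d) * (cst q1 * Z1 * scal q1 q2 (1 + w) - cst (inverse d))
 - (cst q1 * cst q1 * cst q1 * (Z1 * Z1) * scal q1 q2 (1 + w) * scal (q1 * q1) (q2 * q2) (1 + w) - 1) *
   (cst (inverse q1) * cst q1 * cst q1 * (Z1 * Z1) * scal q1 q2 (1 + w) * (1 + w) - 1) *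
   (scal q1 q2 (1 + w) - cst a * cst q2 * Z2) * (scal q1 q2 (1 + w) - cst (inverse a) * cst q2 * Z2) *
   (scal q1 q2 (1 + w) - cst b * cst q2 * Z2) * (scal q1 q2 (1 + w) - cst (inverse b) * cst q2 * Z2))
   ?c ?C ?L ?S ?G ?a0 ?a1 ?a2"
  by (rule ctrl_v ctrl_vh ctrl_vhh ctrl_one ctrl_Z1 ctrl_Z2 ctrl_cst ctrl_mult ctrl_diff ctrl_add assms)+

lemma ctrl_eqI: "ctrl r q1 q2 e c C L S G a0 a1 a2 \<Longrightarrow> c = c' \<Longrightarrow> a0 = a0' \<Longrightarrow> a1 = a1' \<Longrightarrow> a2 = a2'
  \<Longrightarrow> ctrl r q1 q2 e c' C L S G a0' a1' a2'"
  by simp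

lemma GSx_ctrl:
  "\<exists>C L S G. \<forall>r q1 q2 s a b c d. 0 \<le> r \<and> r \<le> 1 \<and> cmod q1 \<le> 1 \<and> cmod q2 \<le> 1 \<and>
     q1 \<noteq> 0 \<and> c \<noteq> 0 \<and> d \<noteq> 0 \<and>
     cmod q1 \<le> M \<and> cmod (inverse q1) \<le> M \<and> cmod q2 \<le> M \<and> cmod s \<le> M \<and> cmod (inverse s) \<le> M \<and>
     cmod a \<le> M \<and> cmod (inverse a) \<le> M \<and> cmod b \<le> M \<and> cmod (inverse b) \<le> M \<and>
     cmod c \<le> M \<and> cmod (inverse c) \<le> M \<and> cmod d \<le> M \<and> cmod (inverse d) \<le> M \<longrightarrow>
     ctrl r q1 q2 (\<lambda>w. GSx q1 q2 s a b c d (1 + w)) 0 C L S G 1 (- 2) 1"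
  unfolding GSx_def
  apply (intro exI allI impI)
  apply (elim conjE)
  apply (rule ctrl_eqI[OF rq.GSx_raw])
                  apply (simp_all add: rq_def field_simps)
  done

lemma co_Lmap: "co (Lmap q1 q2 a0 a1 a2 w) k m =
   (a0 + a1 * (q1 ^ k * q2 ^ m) + a2 * (q1 ^ k * q2 ^ m)^2) * co w k m"
  unfolding Lmap_def co_add co_cst_mult co_scal by (simp add: power_mult_distrib power2_eq_square algebra_simps)

definition Rf where
  "Rf q1 q2 s a b c d t = GSx q1 q2 s a b c d (1 + t) - GSx q1 q2 s a b c d 1 - Lmap q1 q2 1 (- 2) 1 t"

lemma co_GS:
  assumes "l \<noteq> 0" "s \<noteq> 0"
  shows "co (GSx (s * l) (inverse l) s a b c d v) k m = ((s * l) ^ k * (inverse l) ^ m) * co (GG l s a b c d v) k m"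
  using GS_eq[OF assms, of a b c d v, symmetric] by simp

lemma Rf_agree:
  assumes nz: "l \<noteq> 0" "s \<noteq> 0" "c \<noteq> 0" "d \<noteq> 0" and km: "(k, m) \<noteq> (0, 0)"
    and t0: "co t 0 0 = 0"
    and ag: "\<And>i j. i \<le> k \<Longrightarrow> j \<le> m \<Longrightarrow> (i, j) \<noteq> (k, m) \<Longrightarrow> co t i j = co t' i j"
  shows "co (Rf (s * l) (inverse l) s a b c d t) k m = co (Rf (s * l) (inverse l) s a b c d t') k m"
proof -
  define Q where "Q = (s * l) ^ k * (inverse l) ^ m"
  have lin: "lin k m (1 + t) (1 + t') (co t k m - co t' k m)"
    unfolding lin_def agree_def
  proof (intro allI impI)
    fix i j assume "i \<le> k" "j \<le> m"
    then show "co (1 + t) i j = co (1 + t' + cst (co t k m - co t' k m) * E k m) i j"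
      using ag[of i j] by (cases "(i, j) = (k, m)") auto
  qed
  have g: "co (GG l s a b c d (1 + t)) k m = co (GG l s a b c d (1 + t')) k m + (co t k m - co t' k m) * Lc l s k m"
    by (rule lin_GG[OF km lin]) (use t0 nz ag[of 0 0] km in \<open>auto simp: co_one\<close>)
  have Q0: "Q \<noteq> 0" using nz by (simp add: Q_def)
  have Lq: "Lc l s k m = (1 - 2 * Q + Q^2) / Q"
    using Q0 unfolding Lc_def Q_def[symmetric] by (simp add: field_simps power2_eq_square)
  show ?thesis
    unfolding Rf_def co_diff co_Lmap co_GS[OF nz(1,2)] Q_def[symmetric] g Lq
    using Q0 by (simp add: field_simps)
qed

lemma rec_step:
  assumes nz: "l \<noteq> 0" "s \<noteq> 0" and L: "Lc l s k m \<noteq> 0" and D: "k + m = Suc D"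
  shows "(((s * l) ^ k * (inverse l) ^ m) - 1)^2 * co (tab l s a b c d (Suc D)) k m =
     - co (GSx (s * l) (inverse l) s a b c d (tab l s a b c d D)) k m"
proof -
  define Q where "Q = (s * l) ^ k * (inverse l) ^ m"
  have Q0: "Q \<noteq> 0" using nz by (simp add: Q_def)
  have QL: "(Q - 1)^2 = Q * Lc l s k m"
    using Q0 unfolding Lc_def Q_def[symmetric] by (simp add: field_simps power2_eq_square)
  show ?thesis
    unfolding tab_new[OF D] co_GS[OF nz] Q_def[symmetric] QL using L by simp
qed

lemma mul_small:
  fixes G x Kq :: real
  assumes "0 \<le> G" "0 \<le> x" "x \<le> Kq / (4 * (G + 1))" "0 < Kq"
  shows "G * x \<le> Kq / 4"
proof -
  have "G * x \<le> (G + 1) * x" using assms by (simp add: mult_right_mono)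
  also have "\<dots> \<le> (G + 1) * (Kq / (4 * (G + 1)))" using assms by (intro mult_left_mono) auto
  also have "\<dots> = Kq / 4" using assms by (simp add: field_simps)
  finally show ?thesis .
qed

lemma arith_choice:
  fixes Kq S G :: real
  assumes Kq: "0 < Kq" and S: "0 \<le> S" and G: "0 \<le> G"
  defines "\<delta> \<equiv> min 1 (Kq / (4 * (G + 1)))"
  defines "r \<equiv> min 1 (min (Kq * \<delta> / (4 * (S + 1))) (Kq / (4 * (G + 1))))"
  shows "0 < \<delta>" "\<delta> \<le> 1" "0 < r" "r \<le> 1" "S * r + G * (r * \<delta> + \<delta>^2) \<le> Kq * \<delta>"
proof -
  show d0: "0 < \<delta>" using assms by (simp add: \<delta>_def)
  show "\<delta> \<le> 1" by (simp add: \<delta>_def)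
  show r0: "0 < r" using assms d0 by (simp add: r_def)
  show "r \<le> 1" by (simp add: r_def)
  have dK: "\<delta> \<le> Kq / (4 * (G + 1))" by (simp add: \<delta>_def)
  have rK: "r \<le> Kq / (4 * (G + 1))" by (simp add: r_def)
  have rS: "r \<le> Kq * \<delta> / (4 * (S + 1))" by (simp add: r_def)
  have a: "G * \<delta> \<le> Kq / 4" using mul_small[OF G _ dK Kq] d0 by simp
  have b: "G * r \<le> Kq / 4" using mul_small[OF G _ rK Kq] r0 by simp
  have c: "S * r \<le> Kq * \<delta> / 4"
    using mul_small[of S r "Kq * \<delta>"] S rS r0 d0 Kq by simp
  have "G * (r * \<delta> + \<delta>^2) = (G * r) * \<delta> + (G * \<delta>) * \<delta>" by (simp add: algebra_simps power2_eq_square)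
  also have "\<dots> \<le> (Kq / 4) * \<delta> + (Kq / 4) * \<delta>"
    using a b d0 by (intro add_mono mult_right_mono) auto
  finally have "G * (r * \<delta> + \<delta>^2) \<le> Kq * \<delta> / 2" by simp
  then show "S * r + G * (r * \<delta> + \<delta>^2) \<le> Kq * \<delta>" using c d0 Kq mult_pos_pos[OF Kq d0] by linarith
qed

lemma co_le_nrm:
  assumes "0 \<le> r" "k \<le> n" "m \<le> n"
  shows "cmod (co f k m) * r ^ (k + m) \<le> nrm r n f"
proof -
  have "cmod (co f k m) * r ^ (k + m) \<le> (\<Sum>m'\<le>n. cmod (co f k m') * r ^ (k + m'))"
    using assms by (intro member_le_sum) auto
  also have "\<dots> \<le> nrm r n f"
    unfolding nrm_def using assms
    by (intro member_le_sum[of k "{..n}" "\<lambda>k. \<Sum>m'\<le>n. cmod (co f k m') * r ^ (k + m')"]) (auto intro!: sum_nonneg)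
  finally show ?thesis .
qed

lemma Q_small:
  assumes "0 \<le> \<rho>" "\<rho> \<le> 1" "cmod q1 \<le> \<rho>" "cmod q2 \<le> \<rho>" "(k, m) \<noteq> (0, 0)"
  shows "cmod (q1 ^ k * q2 ^ m) \<le> \<rho>"
proof -
  have "cmod (q1 ^ k * q2 ^ m) = cmod q1 ^ k * cmod q2 ^ m" by (simp add: norm_mult norm_power)
  also have "\<dots> \<le> \<rho> ^ k * \<rho> ^ m" using assms by (intro mult_mono power_mono) auto
  also have "\<dots> = \<rho> ^ (k + m)" by (simp add: power_add)
  also have "\<dots> \<le> \<rho>" using power_decreasing[of 1 "k + m" \<rho>] assms by auto
  finally show ?thesis .
qed

lemma coeff_bound_main:
  fixes s a b c d :: complex and \<rho> M :: real
  assumes \<rho>0: "0 \<le> \<rho>" and \<rho>1: "\<rho> < 1" and M1: "1 \<le> M"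
    and nz: "s \<noteq> 0" "c \<noteq> 0" "d \<noteq> 0"
    and Ms: "cmod s \<le> M" "cmod (inverse s) \<le> M" "cmod a \<le> M" "cmod (inverse a) \<le> M"
      "cmod b \<le> M" "cmod (inverse b) \<le> M" "cmod c \<le> M" "cmod (inverse c) \<le> M"
      "cmod d \<le> M" "cmod (inverse d) \<le> M"
  shows "\<exists>r>0. r \<le> 1 \<and> (\<forall>l. l \<noteq> 0 \<and> cmod (s * l) \<le> \<rho> \<and> cmod (inverse l) \<le> \<rho> \<and>
     cmod (inverse (s * l)) \<le> M \<longrightarrow> (\<forall>k m. cmod (co (UU l s a b c d) k m) \<le> 2 / r ^ (k + m)))"
proof -
  obtain C L S G where CG: "\<forall>r q1 q2 s a b c d. 0 \<le> r \<and> r \<le> 1 \<and> cmod q1 \<le> 1 \<and> cmod q2 \<le> 1 \<and>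
     q1 \<noteq> 0 \<and> c \<noteq> 0 \<and> d \<noteq> 0 \<and>
     cmod q1 \<le> M \<and> cmod (inverse q1) \<le> M \<and> cmod q2 \<le> M \<and> cmod s \<le> M \<and> cmod (inverse s) \<le> M \<and>
     cmod a \<le> M \<and> cmod (inverse a) \<le> M \<and> cmod b \<le> M \<and> cmod (inverse b) \<le> M \<and>
     cmod c \<le> M \<and> cmod (inverse c) \<le> M \<and> cmod d \<le> M \<and> cmod (inverse d) \<le> M \<longrightarrow>
     ctrl r q1 q2 (\<lambda>w. GSx q1 q2 s a b c d (1 + w)) 0 C L S G 1 (- 2) 1"
    using GSx_ctrl[of M] by blast
  define Kq where "Kq = (1 - \<rho>)^2"
  have Kq: "0 < Kq" using \<rho>1 by (simp add: Kq_def)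
  define \<delta> where "\<delta> = min 1 (Kq / (4 * (\<bar>G\<bar> + 1)))"
  define r where "r = min 1 (min (Kq * \<delta> / (4 * (\<bar>S\<bar> + 1))) (Kq / (4 * (\<bar>G\<bar> + 1))))"
  note AC = arith_choice[OF Kq abs_ge_zero[of S] abs_ge_zero[of G], folded \<delta>_def, folded r_def]
  have d0: "0 < \<delta>" and d1: "\<delta> \<le> 1" and r0: "0 < r" and r1: "r \<le> 1" using AC by auto
  have main: "cmod (co (UU l s a b c d) k m) \<le> 2 / r ^ (k + m)"
    if l: "l \<noteq> 0" "cmod (s * l) \<le> \<rho>" "cmod (inverse l) \<le> \<rho>" "cmod (inverse (s * l)) \<le> M" for l k m
  proof -
    define q1 where "q1 = s * l"
    define q2 where "q2 = inverse l"
    have q10: "q1 \<noteq> 0" using l nz by (simp add: q1_def)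
    have ct: "ctrl r q1 q2 (\<lambda>w. GSx q1 q2 s a b c d (1 + w)) 0 C L S G 1 (- 2) 1"
      using CG[rule_format, of r q1 q2 c d s a b] r0 r1 l \<rho>1 M1 Ms nz q10
      unfolding q1_def[symmetric] q2_def[symmetric] by auto
    have S0: "0 \<le> S" and G0: "0 \<le> G"
      and nS: "\<And>n. nrm r n (GSx q1 q2 s a b c d 1) \<le> S * r"
      and nR: "\<And>w n. nrm r n w \<le> 1 \<Longrightarrow> nrm r n (Rf q1 q2 s a b c d w) \<le> G * (r * nrm r n w + (nrm r n w)^2)"
      using ct unfolding ctrl_def Rf_def by simp_all
    have key: "S * r + G * (r * \<delta> + \<delta>^2) \<le> Kq * \<delta>" using AC S0 G0 by simp
    define T where "T D = tab l s a b c d D - 1" for D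
    have T00: "co (T D) 0 0 = 0" for D by (simp add: T_def tab_00 co_one)
    have tabT: "tab l s a b c d D = 1 + T D" for D by (simp add: T_def)
    have Qs: "cmod (q1 ^ k * q2 ^ m) \<le> \<rho>" if "(k, m) \<noteq> (0, 0)" for k m
      using Q_small[OF \<rho>0 _ _ _ that] \<rho>1 l by (simp add: q1_def q2_def)
    have entry: "cmod (co (T (Suc D)) k m) \<le> (cmod (co (GSx q1 q2 s a b c d 1) k m) + cmod (co (Rf q1 q2 s a b c d (T D)) k m)) / Kq"
      for D k m
    proof (cases "(k, m) = (0, 0) \<or> Suc D < k + m")
      case True
      then have "co (T (Suc D)) k m = 0" using T00 by (auto simp: T_def tab_zero co_one)
      then show ?thesis using Kq by simp
    next
      case False
      then have km: "(k, m) \<noteq> (0, 0)" and le: "k + m \<le> Suc D" by auto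
      then obtain J where J: "k + m = Suc J" by (cases "k + m") auto
      have JD: "J \<le> D" using J le by simp
      define Q where "Q = q1 ^ k * q2 ^ m"
      have Qr: "cmod Q \<le> \<rho>" using Qs[OF km] by (simp add: Q_def)
      have Q1: "1 - \<rho> \<le> cmod (Q - 1)"
        using Qr norm_triangle_ineq2[of 1 Q] by (simp add: norm_minus_commute)
      have Qsq: "Kq \<le> cmod ((Q - 1)^2)"
        unfolding Kq_def norm_power using Q1 \<rho>1 by (intro power_mono) auto
      have Q0: "Q \<noteq> 0" using q10 l by (simp add: Q_def q2_def)
      have Lnz: "Lc l s k m \<noteq> 0"
      proof -
        have "Q \<noteq> 1" using Qr \<rho>1 by auto
        moreover have "Lc l s k m = (Q - 1)^2 / Q"
          using Q0 unfolding Lc_def by (simp add: Q_def q1_def q2_def field_simps power2_eq_square)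
        ultimately show ?thesis using Q0 by simp
      qed
      have rs: "(Q - 1)^2 * co (tab l s a b c d (Suc J)) k m = - co (GSx q1 q2 s a b c d (tab l s a b c d J)) k m"
        using rec_step[OF l(1) nz(1) Lnz J] by (simp add: Q_def q1_def q2_def)
      have TJ: "co (T J) k m = 0" using J km by (simp add: T_def tab_zero co_one)
      have "co (GSx q1 q2 s a b c d (tab l s a b c d J)) k m =
          co (GSx q1 q2 s a b c d 1) k m + co (Lmap q1 q2 1 (- 2) 1 (T J)) k m + co (Rf q1 q2 s a b c d (T J)) k m"
        unfolding tabT Rf_def by simp
      also have "co (Lmap q1 q2 1 (- 2) 1 (T J)) k m = 0" by (simp add: co_Lmap TJ)
      also have "co (Rf q1 q2 s a b c d (T J)) k m = co (Rf q1 q2 s a b c d (T D)) k m"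
        unfolding q1_def q2_def
      proof (rule Rf_agree[OF l(1) nz km T00])
        fix i j assume ij: "i \<le> k" "j \<le> m" "(i, j) \<noteq> (k, m)"
        then have "i + j \<le> J" using J by auto
        then show "co (T J) i j = co (T D) i j" using JD by (simp add: T_def tab_stable)
      qed
      finally have g: "co (GSx q1 q2 s a b c d (tab l s a b c d J)) k m =
          co (GSx q1 q2 s a b c d 1) k m + co (Rf q1 q2 s a b c d (T D)) k m" by simp
      have st: "co (tab l s a b c d (Suc D)) k m = co (tab l s a b c d (Suc J)) k m"
        by (rule tab_stable) (use J JD in auto)
      have eqT: "co (T (Suc D)) k m = co (tab l s a b c d (Suc J)) k m"
        using km st by (simp add: T_def co_one del: tab.simps)
      have "Kq * cmod (co (T (Suc D)) k m) \<le> cmod ((Q - 1)^2) * cmod (co (T (Suc D)) k m)"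
        using Qsq by (intro mult_right_mono) auto
      also have "\<dots> = cmod (co (GSx q1 q2 s a b c d 1) k m + co (Rf q1 q2 s a b c d (T D)) k m)"
      proof -
        have "(Q - 1)^2 * co (T (Suc D)) k m = - (co (GSx q1 q2 s a b c d 1) k m + co (Rf q1 q2 s a b c d (T D)) k m)"
          using rs g eqT by (simp del: tab.simps)
        then show ?thesis by (metis norm_minus_cancel norm_mult)
      qed
      also have "\<dots> \<le> cmod (co (GSx q1 q2 s a b c d 1) k m) + cmod (co (Rf q1 q2 s a b c d (T D)) k m)"
        by (rule norm_triangle_ineq)
      finally show ?thesis using Kq by (simp add: field_simps)
    qed
    have induct: "\<forall>n. nrm r n (T D) \<le> \<delta>" for D
    proof (induction D)
      case 0
      then show ?case using d0 by (simp add: T_def nrm_def)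
    next
      case (Suc D)
      show ?case
      proof
        fix n
        define X where "X = nrm r n (T D)"
        have X0: "0 \<le> X" using nrm_nonneg r0 by (simp add: X_def)
        have Xd: "X \<le> \<delta>" using Suc by (simp add: X_def)
        have "nrm r n (T (Suc D)) \<le> (\<Sum>k\<le>n. \<Sum>m\<le>n. (cmod (co (GSx q1 q2 s a b c d 1) k m)
            + cmod (co (Rf q1 q2 s a b c d (T D)) k m)) / Kq * r ^ (k + m))"
          unfolding nrm_def using r0 by (intro sum_mono mult_right_mono entry) auto
        also have "\<dots> = (nrm r n (GSx q1 q2 s a b c d 1) + nrm r n (Rf q1 q2 s a b c d (T D))) / Kq"
          unfolding nrm_def by (simp add: sum_divide_distrib[symmetric] sum.distrib algebra_simps)
        also have "\<dots> \<le> (S * r + G * (r * X + X^2)) / Kq"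
          using nS[of n] nR[of n "T D"] Xd d1 Kq unfolding X_def[symmetric]
          by (intro divide_right_mono add_mono) auto
        also have "\<dots> \<le> (S * r + G * (r * \<delta> + \<delta>^2)) / Kq"
          using Xd X0 G0 S0 r0 Kq by (intro divide_right_mono add_mono mult_left_mono power_mono) auto
        also have "\<dots> \<le> \<delta>" using key Kq by (simp add: field_simps)
        finally show "nrm r n (T (Suc D)) \<le> \<delta>" .
      qed
    qed
    have "cmod (co (T (k + m)) k m) * r ^ (k + m) \<le> \<delta>"
      using co_le_nrm[of r k "k + m" m "T (k + m)"] spec[OF induct[of "k + m"], of "k + m"] r0 by auto
    then have t: "cmod (co (T (k + m)) k m) \<le> 1 / r ^ (k + m)"
      using d1 r0 by (simp add: field_simps)
    have u: "co (UU l s a b c d) k m = co (T (k + m)) k m + co 1 k m"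
      by (simp add: UU_def T_def)
    have "cmod (co (UU l s a b c d) k m) \<le> 1 / r ^ (k + m) + 1"
      unfolding u using t norm_triangle_ineq[of "co (T (k + m)) k m" "co 1 k m"]
      by (auto simp: co_one)
    also have "\<dots> \<le> 2 / r ^ (k + m)"
    proof -
      have "r ^ (k + m) \<le> 1" using r0 r1 by (simp add: power_le_one)
      then have "1 \<le> 1 / r ^ (k + m)" using r0 by (simp add: field_simps)
      then show ?thesis by simp
    qed
    finally show ?thesis .
  qed
  show ?thesis using r0 r1 main by blast
qed

lemma geom_tail:
  fixes f :: "nat \<Rightarrow> complex" and C \<theta> :: real
  assumes b: "\<And>n. cmod (f n) \<le> C * \<theta> ^ n" and t0: "0 \<le> \<theta>" and t1: "\<theta> < 1"
  shows "summable f" "cmod (suminf f - (\<Sum>i<k. f i)) \<le> C * \<theta> ^ k / (1 - \<theta>)"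
proof -
  have sg: "summable (\<lambda>n. C * \<theta> ^ n)" using t0 t1 by (intro summable_mult summable_geometric) auto
  show sf: "summable f" by (rule summable_comparison_test'[OF sg b])
  have sg': "summable (\<lambda>n. C * \<theta> ^ k * \<theta> ^ n)" using t0 t1 by (intro summable_mult summable_geometric) auto
  have bk: "cmod (f (n + k)) \<le> C * \<theta> ^ k * \<theta> ^ n" for n
    using b[of "n + k"] by (simp add: power_add mult_ac)
  have sk: "summable (\<lambda>n. cmod (f (n + k)))"
    by (rule summable_comparison_test'[OF sg']) (use bk in auto)
  have "suminf f - (\<Sum>i<k. f i) = (\<Sum>n. f (n + k))"
    using suminf_split_initial_segment[OF sf, of k] by simp
  also have "cmod \<dots> \<le> (\<Sum>n. cmod (f (n + k)))" by (rule summable_norm[OF sk])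
  also have "\<dots> \<le> (\<Sum>n. C * \<theta> ^ k * \<theta> ^ n)" by (rule suminf_le[OF bk sk sg'])
  also have "\<dots> = C * \<theta> ^ k * (1 / (1 - \<theta>))"
    using t0 t1 by (simp add: suminf_mult suminf_geometric)
  finally show "cmod (suminf f - (\<Sum>i<k. f i)) \<le> C * \<theta> ^ k / (1 - \<theta>)" by simp
qed

lemma dbl_bound:
  fixes a :: "nat \<Rightarrow> nat \<Rightarrow> complex" and B \<theta> :: real
  assumes b: "\<And>n m. cmod (a n m) \<le> B * \<theta> ^ (n + m)" and t0: "0 \<le> \<theta>" and t1: "\<theta> < 1"
  shows "cmod ((\<Sum>n\<le>N. \<Sum>m\<le>M. a n m) - (\<Sum>n. \<Sum>m. a n m)) \<le> B / (1 - \<theta>)^2 * (\<theta> ^ Suc N + \<theta> ^ Suc M)"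
proof -
  have B0: "0 \<le> B" using b[of 0 0] by (metis norm_ge_zero order_trans power_0 mult_1_right add_0)
  define g where "g n = (\<Sum>m. a n m)" for n
  have bn: "cmod (a n m) \<le> (B * \<theta> ^ n) * \<theta> ^ m" for n m using b[of n m] by (simp add: power_add mult_ac)
  have gt: "cmod (g n - (\<Sum>m<k. a n m)) \<le> B * \<theta> ^ n * \<theta> ^ k / (1 - \<theta>)" for n k
    unfolding g_def by (rule geom_tail(2)[OF bn t0 t1])
  have gb: "cmod (g n) \<le> (B / (1 - \<theta>)) * \<theta> ^ n" for n
    using gt[of n 0] by simp
  have gtail: "cmod ((\<Sum>n. g n) - (\<Sum>n<k. g n)) \<le> (B / (1 - \<theta>)) * \<theta> ^ k / (1 - \<theta>)" for k
    by (rule geom_tail(2)[OF gb t0 t1])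
  have "(\<Sum>n\<le>N. \<Sum>m\<le>M. a n m) - (\<Sum>n. \<Sum>m. a n m)
      = (\<Sum>n<Suc N. ((\<Sum>m<Suc M. a n m) - g n)) + ((\<Sum>n<Suc N. g n) - (\<Sum>n. g n))"
    by (simp add: g_def lessThan_Suc_atMost sum_subtractf)
  also have "cmod \<dots> \<le> (\<Sum>n<Suc N. cmod ((\<Sum>m<Suc M. a n m) - g n)) + cmod ((\<Sum>n<Suc N. g n) - (\<Sum>n. g n))"
    by (rule order.trans[OF norm_triangle_ineq add_mono[OF norm_sum order_refl]])
  also have "\<dots> = (\<Sum>n<Suc N. cmod (g n - (\<Sum>m<Suc M. a n m))) + cmod ((\<Sum>n. g n) - (\<Sum>n<Suc N. g n))"
    by (simp add: norm_minus_commute)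
  also have "\<dots> \<le> (\<Sum>n<Suc N. B * \<theta> ^ n * \<theta> ^ Suc M / (1 - \<theta>)) + (B / (1 - \<theta>)) * \<theta> ^ Suc N / (1 - \<theta>)"
    by (intro add_mono sum_mono gt gtail)
  also have "(\<Sum>n<Suc N. B * \<theta> ^ n * \<theta> ^ Suc M / (1 - \<theta>)) = (\<Sum>n<Suc N. \<theta> ^ n * (B * \<theta> ^ Suc M / (1 - \<theta>)))"
    by (intro sum.cong refl) simp
  also have "\<dots> = B * \<theta> ^ Suc M / (1 - \<theta>) * (\<Sum>n<Suc N. \<theta> ^ n)"
    by (simp only: sum_distrib_right[symmetric] mult.commute)
  also have "(\<Sum>n<Suc N. \<theta> ^ n) \<le> 1 / (1 - \<theta>)"
  proof -
    have sg: "summable (\<lambda>n. \<theta> ^ n)" using t0 t1 by (intro summable_geometric) auto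
    have "(\<Sum>n<Suc N. \<theta> ^ n) \<le> (\<Sum>n. \<theta> ^ n)"
      by (rule sum_le_suminf[OF sg]) (use t0 in auto)
    also have "\<dots> = 1 / (1 - \<theta>)" using t0 t1 by (intro suminf_geometric) auto
    finally show ?thesis .
  qed
  then have hX: "B * \<theta> ^ Suc M / (1 - \<theta>) * (\<Sum>n<Suc N. \<theta> ^ n) \<le> B * \<theta> ^ Suc M / (1 - \<theta>) * (1 / (1 - \<theta>))"
    using B0 t0 t1 by (intro mult_left_mono) auto
  have e1: "B * \<theta> ^ Suc M / (1 - \<theta>) * (1 / (1 - \<theta>)) = B / (1 - \<theta>)^2 * \<theta> ^ Suc M"
    by (simp add: power2_eq_square)
  have e2: "(B / (1 - \<theta>)) * \<theta> ^ Suc N / (1 - \<theta>) = B / (1 - \<theta>)^2 * \<theta> ^ Suc N"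
    by (simp add: power2_eq_square)
  have "B * \<theta> ^ Suc M / (1 - \<theta>) * (\<Sum>n<Suc N. \<theta> ^ n) + (B / (1 - \<theta>)) * \<theta> ^ Suc N / (1 - \<theta>)
      \<le> B / (1 - \<theta>)^2 * (\<theta> ^ Suc N + \<theta> ^ Suc M)"
    using hX e1 e2 distrib_left[of "B / (1 - \<theta>)^2" "\<theta> ^ Suc N" "\<theta> ^ Suc M"] by linarith
  finally show ?thesis by linarith
qed

lemma dbl_unif:
  fixes a :: "nat \<Rightarrow> nat \<Rightarrow> 'x \<Rightarrow> complex" and B \<theta> :: real
  assumes b: "\<And>x n m. x \<in> S \<Longrightarrow> cmod (a n m x) \<le> B * \<theta> ^ (n + m)" and t0: "0 \<le> \<theta>" and t1: "\<theta> < 1"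
  shows "uniform_limit S (\<lambda>(N, M) x. \<Sum>n\<le>N. \<Sum>m\<le>M. a n m x) (\<lambda>x. \<Sum>n. \<Sum>m. a n m x) (sequentially \<times>\<^sub>F sequentially)"
proof (rule uniform_limitI)
  fix e :: real assume e: "e > 0"
  have B0: "0 \<le> B" if ne: "S \<noteq> {}"
  proof -
    obtain x where "x \<in> S" using ne by auto
    then show ?thesis using b[of x 0 0] by (metis norm_ge_zero order_trans power_0 mult_1_right add_0)
  qed
  have lim: "(\<lambda>N. \<bar>B\<bar> / (1 - \<theta>)^2 * \<theta> ^ Suc N) \<longlonglongrightarrow> 0"
    using t0 t1 by (intro tendsto_mult_right_zero LIMSEQ_power_zero[THEN LIMSEQ_Suc]) auto
  then obtain N0 where N0: "\<And>N. N \<ge> N0 \<Longrightarrow> \<bar>B\<bar> / (1 - \<theta>)^2 * \<theta> ^ Suc N < e / 2"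
    using e unfolding LIMSEQ_def dist_real_def by (metis abs_less_iff add_0 diff_0_right half_gt_zero order_le_less_trans abs_ge_self)
  show "\<forall>\<^sub>F NM in sequentially \<times>\<^sub>F sequentially. \<forall>x\<in>S.
      dist ((\<lambda>(N, M) x. \<Sum>n\<le>N. \<Sum>m\<le>M. a n m x) NM x) (\<Sum>n. \<Sum>m. a n m x) < e"
    unfolding eventually_prod_sequentially
  proof (intro exI[of _ N0] allI impI ballI)
    fix M N x assume MN: "M \<ge> N0" "N \<ge> N0" and x: "x \<in> S"
    have "cmod ((\<Sum>n\<le>N. \<Sum>m\<le>M. a n m x) - (\<Sum>n. \<Sum>m. a n m x)) \<le> B / (1 - \<theta>)^2 * (\<theta> ^ Suc N + \<theta> ^ Suc M)"
      by (rule dbl_bound[OF b[OF x] t0 t1])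
    also have "\<dots> = \<bar>B\<bar> / (1 - \<theta>)^2 * \<theta> ^ Suc N + \<bar>B\<bar> / (1 - \<theta>)^2 * \<theta> ^ Suc M"
    proof -
      have "S \<noteq> {}" using x by auto
      then have Bx: "\<bar>B\<bar> = B" using B0 by simp
      show ?thesis by (simp only: Bx distrib_left)
    qed
    also have "\<dots> < e / 2 + e / 2" using N0 MN by (intro add_strict_mono) auto
    finally show "dist ((\<lambda>(N, M) x. \<Sum>n\<le>N. \<Sum>m\<le>M. a n m x) (N, M) x) (\<Sum>n. \<Sum>m. a n m x) < e"
      by (simp add: dist_norm)
  qed
qed

lemma dbl_unif_diag:
  fixes a :: "nat \<Rightarrow> nat \<Rightarrow> 'x \<Rightarrow> complex" and B \<theta> :: real
  assumes b: "\<And>x n m. x \<in> S \<Longrightarrow> cmod (a n m x) \<le> B * \<theta> ^ (n + m)" and t0: "0 \<le> \<theta>" and t1: "\<theta> < 1"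
  shows "uniform_limit S (\<lambda>N x. \<Sum>n\<le>N. \<Sum>m\<le>N. a n m x) (\<lambda>x. \<Sum>n. \<Sum>m. a n m x) sequentially"
proof -
  have "filterlim (\<lambda>N. (N, N)) (sequentially \<times>\<^sub>F sequentially) sequentially"
    by (intro filterlim_Pair filterlim_ident)
  from filterlim_compose[OF dbl_unif[OF b t0 t1] this] show ?thesis
    by (simp add: o_def)
qed

lemma nonres_L0s:
  assumes x1: "norm \<xi> < 1" and x0: "\<xi> \<noteq> 0" and L: "\<Lambda> \<in> L0s \<xi>"
  shows "nonres \<Lambda> \<xi>"
proof -
  have n1: "1 < norm \<Lambda>" and n2: "norm \<Lambda> < inverse (norm \<xi>)" using L by (auto simp: L0s_def)
  have a: "cmod (\<xi> * \<Lambda>) < 1"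
  proof -
    have "cmod (\<xi> * \<Lambda>) = norm \<xi> * norm \<Lambda>" by (simp add: norm_mult)
    also have "\<dots> < norm \<xi> * inverse (norm \<xi>)" using n2 x0 by (intro mult_strict_left_mono) auto
    also have "\<dots> = 1" using x0 by simp
    finally show ?thesis .
  qed
  have b: "cmod (inverse \<Lambda>) < 1" using n1 by (simp add: norm_inverse inverse_less_1_iff)
  define \<rho> where "\<rho> = max (cmod (\<xi> * \<Lambda>)) (cmod (inverse \<Lambda>))"
  have r1: "\<rho> < 1" using a b by (simp add: \<rho>_def)
  have r0: "0 \<le> \<rho>" by (simp add: \<rho>_def le_max_iff_disj)
  show ?thesis unfolding nonres_def
  proof (intro allI impI)
    fix m n :: nat assume "(m, n) \<noteq> (0, 0)"
    then have "cmod ((\<xi> * \<Lambda>) ^ m * inverse \<Lambda> ^ n) \<le> \<rho>"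
      using r1 r0 by (intro Q_small) (auto simp: \<rho>_def)
    then show "(\<xi> * \<Lambda>) ^ m * inverse \<Lambda> ^ n \<noteq> 1" using r1 by auto
  qed
qed

lemma open_L0s: "open (L0s \<xi>)"
proof -
  have "L0s \<xi> = {x. 1 < norm x} \<inter> {x. norm x < inverse (norm \<xi>)}" by (auto simp: L0s_def)
  moreover have "open {x::complex. 1 < norm x}" by (rule open_Collect_less) (auto intro: continuous_intros)
  moreover have "open {x::complex. norm x < inverse (norm \<xi>)}" by (rule open_Collect_less) (auto intro: continuous_intros)
  ultimately show ?thesis by auto
qed

lemma poly6_holo: "poly6 P \<Longrightarrow> (\<lambda>l. P (l, s, a, b, c, d)) holomorphic_on A"
  by (induction rule: poly6.induct) (auto intro!: holomorphic_intros)

lemma L0s_regular: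
  assumes "norm \<xi> < 1" "\<xi> \<noteq> 0" "a \<noteq> 0" "b \<noteq> 0" "c \<noteq> 0" "d \<noteq> 0" "l \<in> L0s \<xi>"
  shows "(l, \<xi>, a, b, c, d) \<in> regular_params"
proof -
  have "l \<noteq> 0" using assms(7) by (auto simp: L0s_def)
  then show ?thesis using assms nonres_L0s[OF assms(1,2,7)] by (simp add: regular_params_def)
qed

lemma XX_UU: "1 \<le> n \<Longrightarrow> XX n (int n - int m) (l, s, a, b, c, d) = co (UU l s a b c d) (n - 1) m"
  by (simp add: XX_def)

lemma h_holo:
  assumes "norm \<xi> < 1" "\<xi> \<noteq> 0" "a \<noteq> 0" "b \<noteq> 0" "c \<noteq> 0" "d \<noteq> 0"
  shows "(\<lambda>l. co (UU l \<xi> a b c d) k m) holomorphic_on L0s \<xi>"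
proof -
  obtain P Q where PQ: "poly6 P" "poly6 Q"
    "\<forall>p\<in>regular_params. Q p \<noteq> 0 \<and> XX (Suc k) (int (Suc k) - int m) p = P p / Q p"
    using rr_XX[of "Suc k" "int (Suc k) - int m"] unfolding rational_regular_on_def by blast
  have "(\<lambda>l. P (l, \<xi>, a, b, c, d) / Q (l, \<xi>, a, b, c, d)) holomorphic_on L0s \<xi>"
    using PQ L0s_regular[OF assms] by (intro holomorphic_intros poly6_holo) auto
  then show ?thesis
  proof (rule holomorphic_transform)
    fix l assume l: "l \<in> L0s \<xi>"
    then show "P (l, \<xi>, a, b, c, d) / Q (l, \<xi>, a, b, c, d) = co (UU l \<xi> a b c d) k m"
      using PQ(3) L0s_regular[OF assms l] XX_UU[of "Suc k" m l \<xi> a b c d] by auto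
  qed
qed

lemma annulus_margin:
  assumes x1: "norm \<xi> < 1" and x0: "\<xi> \<noteq> 0" and K: "compact K" "K \<subseteq> L0s \<xi>"
  shows "\<exists>e R1 R2. 0 < e \<and> 1 < R1 \<and> R1 \<le> R2 \<and> R2 < inverse (norm \<xi>) \<and>
     (\<forall>x\<in>K. \<forall>y\<in>cball x e. R1 \<le> norm y \<and> norm y \<le> R2)"
proof (cases "K = {}")
  case True
  have "1 < (1 + inverse (norm \<xi>)) / 2" using x1 x0
    by (simp add: field_simps)
  moreover have "(1 + inverse (norm \<xi>)) / 2 < inverse (norm \<xi>)" using x1 x0
    by (simp add: field_simps)
  ultimately show ?thesis using True by (intro exI[of _ 1] exI[of _ "(1 + inverse (norm \<xi>)) / 2"]) auto
next
  case False
  obtain x1' where x1': "x1' \<in> K" "\<forall>y\<in>K. norm x1' \<le> norm y"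
    using continuous_attains_inf[OF K(1) False, of norm] by (auto intro: continuous_intros)
  obtain x2' where x2': "x2' \<in> K" "\<forall>y\<in>K. norm y \<le> norm x2'"
    using continuous_attains_sup[OF K(1) False, of norm] by (auto intro: continuous_intros)
  define m1 where "m1 = norm x1'"
  define m2 where "m2 = norm x2'"
  have m1: "1 < m1" using x1' K(2) by (auto simp: L0s_def m1_def)
  have m2: "m2 < inverse (norm \<xi>)" using x2' K(2) by (auto simp: L0s_def m2_def)
  have m12: "m1 \<le> m2" using x1' x2' by (auto simp: m1_def m2_def)
  define e where "e = min ((m1 - 1) / 2) ((inverse (norm \<xi>) - m2) / 2)"
  have e0: "0 < e" using m1 m2 by (simp add: e_def)
  show ?thesis
  proof (intro exI conjI ballI)
    show "0 < e" by (rule e0)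
    have "e \<le> (m1 - 1) / 2" unfolding e_def by (rule min.cobounded1)
    then have "2 * e \<le> m1 - 1" by simp
    then show "1 < m1 - e" using m1 e0 by linarith
    show "m1 - e \<le> m2 + e" using m12 e0 by simp
    have "e \<le> (inverse (norm \<xi>) - m2) / 2" unfolding e_def by (rule min.cobounded2)
    then have "2 * e \<le> inverse (norm \<xi>) - m2" by simp
    then show "m2 + e < inverse (norm \<xi>)" using m2 e0 by linarith
  next
    fix x y assume x: "x \<in> K" and y: "y \<in> cball x e"
    have d: "norm (y - x) \<le> e" using y by (simp add: dist_norm norm_minus_commute)
    have "m1 \<le> norm x" "norm x \<le> m2" using x x1' x2' by (auto simp: m1_def m2_def)
    moreover have "norm x - norm (y - x) \<le> norm y" "norm y \<le> norm x + norm (y - x)"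
      using norm_triangle_ineq2[of x "x - y"] norm_triangle_ineq[of x "y - x"]
      by (auto simp: norm_minus_commute)
    ultimately show "m1 - e \<le> norm y" "norm y \<le> m2 + e" using d by linarith+
  qed
qed

type_synonym c3 = "complex \<times> complex \<times> complex"

definition tm :: "(nat \<Rightarrow> nat \<Rightarrow> complex \<Rightarrow> complex) \<Rightarrow> nat \<Rightarrow> nat \<Rightarrow> c3 \<Rightarrow> complex" where
  "tm hh n m z = (if n = 0 then 0 else hh (n - 1) m (snd (snd z)) * fst z ^ n * fst (snd z) ^ m)"
definition ta1 :: "(nat \<Rightarrow> nat \<Rightarrow> complex \<Rightarrow> complex) \<Rightarrow> nat \<Rightarrow> nat \<Rightarrow> c3 \<Rightarrow> complex" where
  "ta1 hh n m z = (if n = 0 then 0 else hh (n - 1) m (snd (snd z)) * (of_nat n * fst z ^ (n - 1)) * fst (snd z) ^ m)"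
definition ta2 :: "(nat \<Rightarrow> nat \<Rightarrow> complex \<Rightarrow> complex) \<Rightarrow> nat \<Rightarrow> nat \<Rightarrow> c3 \<Rightarrow> complex" where
  "ta2 hh n m z = (if n = 0 then 0 else hh (n - 1) m (snd (snd z)) * fst z ^ n * (of_nat m * fst (snd z) ^ (m - 1)))"
definition ta3 :: "(nat \<Rightarrow> nat \<Rightarrow> complex \<Rightarrow> complex) \<Rightarrow> nat \<Rightarrow> nat \<Rightarrow> c3 \<Rightarrow> complex" where
  "ta3 hh n m z = (if n = 0 then 0 else deriv (hh (n - 1) m) (snd (snd z)) * fst z ^ n * fst (snd z) ^ m)"

lemma tm_deriv_raw:
  fixes H :: "complex \<Rightarrow> complex" and z :: c3
  assumes "(H has_field_derivative H') (at (snd (snd z)))"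
  shows "((\<lambda>z. H (snd (snd z)) * fst z ^ n * fst (snd z) ^ m) has_derivative
     (\<lambda>v. H (snd (snd z)) * (of_nat n * fst z ^ (n - 1)) * fst (snd z) ^ m * fst v
        + H (snd (snd z)) * fst z ^ n * (of_nat m * fst (snd z) ^ (m - 1)) * fst (snd v)
        + H' * fst z ^ n * fst (snd z) ^ m * snd (snd v))) (at z)"
proof -
  have 1: "((\<lambda>z::c3. H (snd (snd z))) has_derivative (\<lambda>v. H' * snd (snd v))) (at z)"
    using has_derivative_compose[OF has_derivative_snd[OF has_derivative_snd[OF has_derivative_ident]]
        has_field_derivative_imp_has_derivative[OF assms]] by simp
  have 2: "((\<lambda>z::c3. fst z ^ n) has_derivative (\<lambda>v. of_nat n * fst v * fst z ^ (n - 1))) (at z)"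
    by (rule has_derivative_power[OF has_derivative_fst[OF has_derivative_ident]])
  have 3: "((\<lambda>z::c3. fst (snd z) ^ m) has_derivative (\<lambda>v. of_nat m * fst (snd v) * fst (snd z) ^ (m - 1))) (at z)"
    by (rule has_derivative_power[OF has_derivative_fst[OF has_derivative_snd[OF has_derivative_ident]]])
  show ?thesis
    by (rule has_derivative_eq_rhs[OF has_derivative_mult[OF has_derivative_mult[OF 1 2] 3]])
       (simp add: fun_eq_iff algebra_simps)
qed

lemma tm_deriv:
  assumes "hh (n - 1) m holomorphic_on A" "open A" "snd (snd z) \<in> A"
  shows "(tm hh n m has_derivative
     (\<lambda>v. ta1 hh n m z * fst v + ta2 hh n m z * fst (snd v) + ta3 hh n m z * snd (snd v))) (at z)"
proof (cases "n = 0")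
  case True
  then have "tm hh n m = (\<lambda>z. 0)" by (simp add: tm_def fun_eq_iff)
  then show ?thesis using True by (simp add: ta1_def ta2_def ta3_def)
next
  case False
  have d: "(hh (n - 1) m has_field_derivative deriv (hh (n - 1) m) (snd (snd z))) (at (snd (snd z)))"
    using holomorphic_derivI[OF assms, of UNIV] by simp
  have e: "tm hh n m = (\<lambda>z. hh (n - 1) m (snd (snd z)) * fst z ^ n * fst (snd z) ^ m)"
    using False by (simp add: tm_def fun_eq_iff)
  show ?thesis
    unfolding e using tm_deriv_raw[OF d, of n m] False
    by (simp add: ta1_def ta2_def ta3_def)
qed

lemma holo_from_series:
  fixes hh :: "nat \<Rightarrow> nat \<Rightarrow> complex \<Rightarrow> complex" and \<Omega> :: "c3 set"
  assumes \<Omega>: "open \<Omega>" and A: "open A" "\<And>z. z \<in> \<Omega> \<Longrightarrow> snd (snd z) \<in> A"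
    and holo: "\<And>k m. hh k m holomorphic_on A"
    and t: "0 \<le> \<theta>" "\<theta> < 1"
    and b0: "\<And>z n m. z \<in> \<Omega> \<Longrightarrow> cmod (tm hh n m z) \<le> B * \<theta> ^ (n + m)"
    and b1: "\<And>z n m. z \<in> \<Omega> \<Longrightarrow> cmod (ta1 hh n m z) \<le> B * \<theta> ^ (n + m)"
    and b2: "\<And>z n m. z \<in> \<Omega> \<Longrightarrow> cmod (ta2 hh n m z) \<le> B * \<theta> ^ (n + m)"
    and b3: "\<And>z n m. z \<in> \<Omega> \<Longrightarrow> cmod (ta3 hh n m z) \<le> B * \<theta> ^ (n + m)"
  shows "holo3 (\<lambda>z. \<Sum>n. \<Sum>m. tm hh n m z) \<Omega>"
  unfolding holo3_def
proof
  fix z0 assume z0: "z0 \<in> \<Omega>"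
  obtain \<epsilon> where \<epsilon>: "\<epsilon> > 0" "ball z0 \<epsilon> \<subseteq> \<Omega>" using \<Omega> z0 open_contains_ball by blast
  define S where "S = ball z0 \<epsilon>"
  define F where "F z = (\<Sum>n. \<Sum>m. tm hh n m z)" for z
  define A1 where "A1 z = (\<Sum>n. \<Sum>m. ta1 hh n m z)" for z
  define A2 where "A2 z = (\<Sum>n. \<Sum>m. ta2 hh n m z)" for z
  define A3 where "A3 z = (\<Sum>n. \<Sum>m. ta3 hh n m z)" for z
  define f where "f N z = (\<Sum>n\<le>N. \<Sum>m\<le>N. tm hh n m z)" for N z
  define f' where "f' N z v = (\<Sum>n\<le>N. \<Sum>m\<le>N. ta1 hh n m z) * fst v + (\<Sum>n\<le>N. \<Sum>m\<le>N. ta2 hh n m z) * fst (snd v)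
     + (\<Sum>n\<le>N. \<Sum>m\<le>N. ta3 hh n m z) * snd (snd v)" for N z and v :: c3
  define g' where "g' z v = A1 z * fst v + A2 z * fst (snd v) + A3 z * snd (snd v)" for z and v :: c3
  have SO: "S \<subseteq> \<Omega>" using \<epsilon> by (simp add: S_def)
  have u0: "uniform_limit \<Omega> f F sequentially"
    unfolding f_def F_def by (rule dbl_unif_diag[OF b0 t])
  have u1: "uniform_limit \<Omega> (\<lambda>N z. \<Sum>n\<le>N. \<Sum>m\<le>N. ta1 hh n m z) A1 sequentially"
    unfolding A1_def by (rule dbl_unif_diag[OF b1 t])
  have u2: "uniform_limit \<Omega> (\<lambda>N z. \<Sum>n\<le>N. \<Sum>m\<le>N. ta2 hh n m z) A2 sequentially"
    unfolding A2_def by (rule dbl_unif_diag[OF b2 t])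
  have u3: "uniform_limit \<Omega> (\<lambda>N z. \<Sum>n\<le>N. \<Sum>m\<le>N. ta3 hh n m z) A3 sequentially"
    unfolding A3_def by (rule dbl_unif_diag[OF b3 t])
  have derf: "(f N has_derivative f' N x) (at x within S)" if x: "x \<in> S" for N x
  proof -
    have xA: "snd (snd x) \<in> A" by (meson A(2) SO subsetD x)
    have "(f N has_derivative (\<lambda>v. \<Sum>n\<le>N. \<Sum>m\<le>N. ta1 hh n m x * fst v + ta2 hh n m x * fst (snd v) + ta3 hh n m x * snd (snd v))) (at x)"
      unfolding f_def
      by (intro has_derivative_sum tm_deriv[OF holo A(1) xA])
    moreover have "(\<lambda>v. \<Sum>n\<le>N. \<Sum>m\<le>N. ta1 hh n m x * fst v + ta2 hh n m x * fst (snd v) + ta3 hh n m x * snd (snd v)) = f' N x"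
      by (simp add: fun_eq_iff f'_def sum.distrib sum_distrib_right)
    ultimately show ?thesis by (simp add: has_derivative_at_withinI)
  qed
  have nle: "\<forall>\<^sub>F N in sequentially. \<forall>x\<in>S. \<forall>h. norm (f' N x h - g' x h) \<le> e * norm h" if e: "e > 0" for e
  proof -
    have e3: "e / 3 > 0" using e by simp
    have ev: "\<forall>\<^sub>F N in sequentially. (\<forall>x\<in>\<Omega>. dist (\<Sum>n\<le>N. \<Sum>m\<le>N. ta1 hh n m x) (A1 x) < e / 3) \<and>
       (\<forall>x\<in>\<Omega>. dist (\<Sum>n\<le>N. \<Sum>m\<le>N. ta2 hh n m x) (A2 x) < e / 3) \<and>
       (\<forall>x\<in>\<Omega>. dist (\<Sum>n\<le>N. \<Sum>m\<le>N. ta3 hh n m x) (A3 x) < e / 3)"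
      by (intro eventually_conj uniform_limitD[OF u1 e3] uniform_limitD[OF u2 e3] uniform_limitD[OF u3 e3])
    show ?thesis
    proof (rule eventually_mono[OF ev], intro ballI allI)
      fix N x h
      assume H: "(\<forall>x\<in>\<Omega>. dist (\<Sum>n\<le>N. \<Sum>m\<le>N. ta1 hh n m x) (A1 x) < e / 3) \<and>
       (\<forall>x\<in>\<Omega>. dist (\<Sum>n\<le>N. \<Sum>m\<le>N. ta2 hh n m x) (A2 x) < e / 3) \<and>
       (\<forall>x\<in>\<Omega>. dist (\<Sum>n\<le>N. \<Sum>m\<le>N. ta3 hh n m x) (A3 x) < e / 3)" and x: "x \<in> S"
      then have xO: "x \<in> \<Omega>" using SO by auto
      define d1 where "d1 = (\<Sum>n\<le>N. \<Sum>m\<le>N. ta1 hh n m x) - A1 x"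
      define d2 where "d2 = (\<Sum>n\<le>N. \<Sum>m\<le>N. ta2 hh n m x) - A2 x"
      define d3 where "d3 = (\<Sum>n\<le>N. \<Sum>m\<le>N. ta3 hh n m x) - A3 x"
      have dd: "cmod d1 < e / 3" "cmod d2 < e / 3" "cmod d3 < e / 3"
        using H xO by (auto simp: d1_def d2_def d3_def dist_norm)
      have hh1: "cmod (fst h) \<le> norm h" and hh2: "cmod (fst (snd h)) \<le> norm h" and hh3: "cmod (snd (snd h)) \<le> norm h"
      proof -
        obtain h1 h2 h3 where hd: "h = (h1, h2, h3)" by (cases h) auto
        have "norm h1 \<le> norm (h1, h2, h3)" "norm (h2, h3) \<le> norm (h1, h2, h3)"
          "norm h2 \<le> norm (h2, h3)" "norm h3 \<le> norm (h2, h3)"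
          by (rule norm_fst_le norm_snd_le)+
        then show "cmod (fst h) \<le> norm h" "cmod (fst (snd h)) \<le> norm h" "cmod (snd (snd h)) \<le> norm h"
          unfolding hd by auto
      qed
      have "f' N x h - g' x h = d1 * fst h + d2 * fst (snd h) + d3 * snd (snd h)"
        by (simp add: f'_def g'_def d1_def d2_def d3_def algebra_simps)
      also have "norm \<dots> \<le> cmod d1 * cmod (fst h) + cmod d2 * cmod (fst (snd h)) + cmod d3 * cmod (snd (snd h))"
        by (metis norm_mult norm_triangle_le norm_triangle_ineq add_mono order_refl)
      also have "\<dots> \<le> (e / 3) * norm h + (e / 3) * norm h + (e / 3) * norm h"
        using dd hh1 hh2 hh3 e by (intro add_mono mult_mono) auto
      finally show "norm (f' N x h - g' x h) \<le> e * norm h" by simp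
    qed
  qed
  have z0S: "z0 \<in> S" using \<epsilon> by (simp add: S_def)
  have lim0: "(\<lambda>N. f N z0) \<longlonglongrightarrow> F z0"
    using tendsto_uniform_limitI[OF u0 z0] .
  obtain g where g: "\<forall>x\<in>S. (\<lambda>N. f N x) \<longlonglongrightarrow> g x \<and> (g has_derivative g' x) (at x within S)"
    using has_derivative_sequence[OF convex_ball[of z0 \<epsilon>, folded S_def] derf nle z0S lim0] by blast
  have gF: "g x = F x" if "x \<in> S" for x
  proof -
    have "x \<in> \<Omega>" using SO that by auto
    then have "(\<lambda>N. f N x) \<longlonglongrightarrow> F x" by (rule tendsto_uniform_limitI[OF u0])
    then show ?thesis using g that LIMSEQ_unique by blast
  qed
  have "(g has_derivative g' z0) (at z0 within S)" using g z0S by blast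
  moreover have "at z0 within S = at z0" using at_within_open[OF z0S] by (simp add: S_def)
  ultimately have "(g has_derivative g' z0) (at z0)" by simp
  then have "(F has_derivative g' z0) (at z0)"
    by (rule has_derivative_transform_within_open[of g _ z0 UNIV S F, simplified])
       (use z0S gF in \<open>auto simp: S_def\<close>)
  moreover have "\<forall>u v w. g' z0 (\<i> * u, \<i> * v, \<i> * w) = \<i> * g' z0 (u, v, w)"
    by (simp add: g'_def algebra_simps)
  ultimately show "\<exists>D. ((\<lambda>z. \<Sum>n. \<Sum>m. tm hh n m z) has_derivative D) (at z0) \<and>
      (\<forall>u v w. D (\<i> * u, \<i> * v, \<i> * w) = \<i> * D (u, v, w))"
    unfolding F_def by blast
qed

lemma pw_core:
  fixes z1 z2 :: complex and r :: real
  assumes "0 < r" "cmod z1 \<le> r / 4" "cmod z2 \<le> r / 4"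
  shows "cmod z1 ^ p * cmod z2 ^ q \<le> r ^ (p + q) * (1 / 4) ^ (p + q)"
proof -
  have "cmod z1 ^ p * cmod z2 ^ q \<le> (r / 4) ^ p * (r / 4) ^ q"
    using assms by (intro mult_mono power_mono) auto
  also have "\<dots> = r ^ (p + q) * (1 / 4) ^ (p + q)"
    by (simp add: power_add power_divide field_simps)
  finally show ?thesis .
qed

lemma norm_1_plus_nat: "cmod (1 + of_nat k) = 1 + real k"
proof -
  have "(1 + of_nat k :: complex) = of_nat (Suc k)" by simp
  then show ?thesis by (metis norm_of_nat of_nat_Suc)
qed

lemma quarter_half: "(1 / 4 :: real) ^ n \<le> (1 / 2) ^ n"
  by (intro power_mono) auto

lemma tb3:
  fixes z1 z2 x :: complex and r C :: real
  assumes r: "0 < r" "r \<le> 1" and x: "cmod x \<le> C / r ^ (k + m)" and C: "0 \<le> C"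
    and z: "cmod z1 \<le> r / 4" "cmod z2 \<le> r / 4"
  shows "cmod (x * z1 ^ Suc k * z2 ^ m) \<le> C * (1 / 2) ^ (Suc k + m)"
proof -
  have "cmod (x * z1 ^ Suc k * z2 ^ m) = cmod x * (cmod z1 ^ Suc k * cmod z2 ^ m)"
    by (simp add: norm_mult norm_power mult_ac)
  also have "\<dots> \<le> (C / r ^ (k + m)) * (r ^ (Suc k + m) * (1 / 4) ^ (Suc k + m))"
    by (rule mult_mono[OF x pw_core[OF r(1) z]]) (use C r in auto)
  also have "\<dots> = C * r * (1 / 4) ^ (Suc k + m)"
    using r by (simp add: field_simps)
  also have "\<dots> \<le> C * 1 * (1 / 2) ^ (Suc k + m)"
    using r C quarter_half[of "Suc k + m"] by (intro mult_mono) auto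
  finally show ?thesis by simp
qed

lemma two_pow: "real (Suc k) \<le> 2 ^ k"
proof -
  have "Suc k \<le> 2 ^ k" by (induction k) auto
  then show ?thesis by (metis of_nat_le_iff of_nat_numeral of_nat_power)
qed

lemma tb1:
  fixes z1 z2 x :: complex and r C :: real
  assumes r: "0 < r" "r \<le> 1" and x: "cmod x \<le> C / r ^ (k + m)" and C: "0 \<le> C"
    and z: "cmod z1 \<le> r / 4" "cmod z2 \<le> r / 4"
  shows "cmod (x * (of_nat (Suc k) * z1 ^ k) * z2 ^ m) \<le> (2 * C) * (1 / 2) ^ (Suc k + m)"
proof -
  have "cmod (x * (of_nat (Suc k) * z1 ^ k) * z2 ^ m) = cmod x * real (Suc k) * (cmod z1 ^ k * cmod z2 ^ m)"
    by (simp add: norm_mult norm_power mult_ac norm_1_plus_nat)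
  also have "\<dots> \<le> (C / r ^ (k + m)) * 2 ^ k * (r ^ (k + m) * (1 / 4) ^ (k + m))"
  proof -
    have a: "cmod x * real (Suc k) \<le> (C / r ^ (k + m)) * 2 ^ k"
      by (rule mult_mono[OF x two_pow]) (use C r in auto)
    show ?thesis by (rule mult_mono[OF a pw_core[OF r(1) z]]) (use C r in auto)
  qed
  also have "\<dots> = C * (2 ^ k * (1 / 4) ^ k) * (1 / 4) ^ m"
    using r by (simp add: field_simps power_add)
  also have "2 ^ k * (1 / 4) ^ k = ((1::real) / 2) ^ k"
    by (simp add: power_divide field_simps flip: power_mult_distrib)
  also have "C * (1 / 2) ^ k * (1 / 4) ^ m \<le> C * (1 / 2) ^ k * (1 / 2) ^ m"
    using C quarter_half[of m] by (intro mult_left_mono) auto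
  also have "\<dots> = (2 * C) * (1 / 2) ^ (Suc k + m)"
    by (simp add: power_add)
  finally show ?thesis .
qed

lemma tb2:
  fixes z1 z2 x :: complex and r C :: real
  assumes r: "0 < r" "r \<le> 1" and x: "cmod x \<le> C / r ^ (k + m)" and C: "0 \<le> C"
    and z: "cmod z1 \<le> r / 4" "cmod z2 \<le> r / 4"
  shows "cmod (x * z1 ^ Suc k * (of_nat m * z2 ^ (m - 1))) \<le> (2 * C) * (1 / 2) ^ (Suc k + m)"
proof (cases m)
  case 0
  then show ?thesis using C by simp
next
  case (Suc q)
  have "cmod (x * z1 ^ Suc k * (of_nat m * z2 ^ (m - 1))) = cmod x * real (Suc q) * (cmod z1 ^ Suc k * cmod z2 ^ q)"
    using Suc by (simp add: norm_mult norm_power mult_ac norm_1_plus_nat)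
  also have "\<dots> \<le> (C / r ^ (k + m)) * 2 ^ q * (r ^ (Suc k + q) * (1 / 4) ^ (Suc k + q))"
  proof -
    have a: "cmod x * real (Suc q) \<le> (C / r ^ (k + m)) * 2 ^ q"
      by (rule mult_mono[OF x two_pow]) (use C r in auto)
    show ?thesis by (rule mult_mono[OF a pw_core[OF r(1) z]]) (use C r in auto)
  qed
  also have "\<dots> = C * (2 ^ q * (1 / 4) ^ q) * (1 / 4) ^ Suc k"
    using r Suc by (simp add: field_simps power_add)
  also have "2 ^ q * (1 / 4) ^ q = ((1::real) / 2) ^ q"
    by (simp add: power_divide field_simps flip: power_mult_distrib)
  also have "C * (1 / 2) ^ q * (1 / 4) ^ Suc k \<le> C * (1 / 2) ^ q * (1 / 2) ^ Suc k"
    using C quarter_half[of "Suc k"] by (intro mult_left_mono) auto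
  also have "\<dots> = (2 * C) * (1 / 2) ^ (Suc k + m)"
    using Suc by (simp add: power_add)
  finally show ?thesis .
qed

lemma sum_from1: "(\<Sum>n\<le>N. f n) = f 0 + (\<Sum>n\<in>{1..N}. f (n::nat))"
proof -
  have "(\<Sum>n\<le>N. f n) = (\<Sum>n\<in>{0..N}. f n)" by (simp add: atMost_atLeast0)
  also have "\<dots> = f 0 + (\<Sum>n\<in>{Suc 0..N}. f n)" by (rule sum.atLeast_Suc_atMost) simp
  finally show ?thesis by simp
qed

lemma analytic_part:
  fixes \<xi> a b c d :: complex and L :: "complex set"
  assumes \<xi>0: "\<xi> \<noteq> 0" and \<xi>1: "norm \<xi> < 1" and nz: "a \<noteq> 0" "b \<noteq> 0" "c \<noteq> 0" "d \<noteq> 0"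
    and L: "open L" "closure L \<subseteq> L0s \<xi>"
  shows "\<exists>Z :: (complex \<times> complex) set. \<exists>F. open Z \<and> (0, 0) \<in> Z \<and>
      holo3 F {(z1, z2, l). (z1, z2) \<in> Z \<and> l \<in> L} \<and>
      uniform_limit {(z1, z2, l). (z1, z2) \<in> Z \<and> l \<in> L}
        (\<lambda>(N, M) (z1, z2, l). \<Sum>n\<in>{1..N}. \<Sum>m\<in>{..M}.
            XX n (int n - int m) (l, \<xi>, a, b, c, d) * z1 ^ n * z2 ^ m)
        F (sequentially \<times>\<^sub>F sequentially)"
proof -
  have "L0s \<xi> \<subseteq> cball 0 (inverse (norm \<xi>))" by (auto simp: L0s_def)
  then have "bounded (closure L)" using L(2) bounded_subset[OF bounded_cball] by blast
  then have "bounded L" using bounded_subset closure_subset by blast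
  then have cK: "compact (closure L)" by simp
  obtain e R1 R2 where eR: "0 < e" "1 < R1" "R1 \<le> R2" "R2 < inverse (norm \<xi>)"
    and ann: "\<forall>x\<in>closure L. \<forall>y\<in>cball x e. R1 \<le> norm y \<and> norm y \<le> R2"
    using annulus_margin[OF \<xi>1 \<xi>0 cK L(2)] by blast
  define Ann where "Ann = {y::complex. R1 \<le> norm y \<and> norm y \<le> R2}"
  have AnnL: "Ann \<subseteq> L0s \<xi>" using eR by (auto simp: Ann_def L0s_def)
  have nx: "0 < norm \<xi>" using \<xi>0 by simp
  define \<rho> where "\<rho> = max (inverse R1) (norm \<xi> * R2)"
  have \<rho>0: "0 \<le> \<rho>" using eR by (simp add: \<rho>_def le_max_iff_disj)
  have \<rho>1: "\<rho> < 1"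
  proof -
    have "inverse R1 < 1" using eR by (simp add: inverse_less_1_iff)
    moreover have "norm \<xi> * R2 < norm \<xi> * inverse (norm \<xi>)" using eR nx by (intro mult_strict_left_mono) auto
    ultimately show ?thesis using nx by (simp add: \<rho>_def)
  qed
  define M where "M = 1 + norm \<xi> + norm (inverse \<xi>) + norm a + norm (inverse a) + norm b + norm (inverse b)
     + norm c + norm (inverse c) + norm d + norm (inverse d) + inverse (norm \<xi> * R1)"
  have iR: "0 \<le> inverse (norm \<xi> * R1)" using eR nx by simp
  have M1: "1 \<le> M" using iR by (simp add: M_def)
  have Ms: "cmod \<xi> \<le> M" "cmod (inverse \<xi>) \<le> M" "cmod a \<le> M" "cmod (inverse a) \<le> M"
      "cmod b \<le> M" "cmod (inverse b) \<le> M" "cmod c \<le> M" "cmod (inverse c) \<le> M"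
      "cmod d \<le> M" "cmod (inverse d) \<le> M" "inverse (norm \<xi> * R1) \<le> M"
    using iR unfolding M_def by (simp_all add: norm_ge_zero add_increasing add_increasing2)
  obtain r where r: "0 < r" "r \<le> 1" and rb: "\<forall>l. l \<noteq> 0 \<and> cmod (\<xi> * l) \<le> \<rho> \<and> cmod (inverse l) \<le> \<rho> \<and>
     cmod (inverse (\<xi> * l)) \<le> M \<longrightarrow> (\<forall>k m. cmod (co (UU l \<xi> a b c d) k m) \<le> 2 / r ^ (k + m))"
    using coeff_bound_main[OF \<rho>0 \<rho>1 M1 \<xi>0 nz(3,4) Ms(1-10)] by blast
  define hh where "hh k m l = co (UU l \<xi> a b c d) k m" for k m l
  have hb: "cmod (hh k m y) \<le> 2 / r ^ (k + m)" if y: "y \<in> Ann" for k m y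
  proof -
    have y1: "R1 \<le> norm y" "norm y \<le> R2" using y by (auto simp: Ann_def)
    have y0: "y \<noteq> 0" using y1 eR by auto
    have "cmod (\<xi> * y) \<le> \<rho>"
    proof -
      have "cmod (\<xi> * y) = norm \<xi> * norm y" by (simp add: norm_mult)
      also have "\<dots> \<le> norm \<xi> * R2" using y1 by (intro mult_left_mono) auto
      finally show ?thesis by (simp add: \<rho>_def)
    qed
    moreover have "cmod (inverse y) \<le> \<rho>"
    proof -
      have "cmod (inverse y) = inverse (norm y)" by (simp add: norm_inverse)
      also have "\<dots> \<le> inverse R1" using y1 eR by (intro le_imp_inverse_le) auto
      finally show ?thesis by (simp add: \<rho>_def)
    qed
    moreover have "cmod (inverse (\<xi> * y)) \<le> M"
    proof -
      have "cmod (inverse (\<xi> * y)) = inverse (norm \<xi> * norm y)" by (simp add: norm_inverse norm_mult)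
      also have "\<dots> \<le> inverse (norm \<xi> * R1)" using y1 eR nx by (intro le_imp_inverse_le mult_left_mono) auto
      finally show ?thesis using Ms(11) by simp
    qed
    ultimately show ?thesis using rb y0 by (simp add: hh_def)
  qed
  have holo: "hh k m holomorphic_on L0s \<xi>" for k m
    unfolding hh_def by (rule h_holo[OF \<xi>1 \<xi>0 nz])
  have cb: "cball l e \<subseteq> Ann" if "l \<in> closure L" for l using ann that by (auto simp: Ann_def)
  have db: "cmod (deriv (hh k m) l) \<le> (2 / e) / r ^ (k + m)" if l: "l \<in> closure L" for k m l
  proof -
    have sub: "cball l e \<subseteq> L0s \<xi>" using cb[OF l] AnnL by auto
    have "norm ((deriv ^^ 1) (hh k m) l) \<le> fact 1 * (2 / r ^ (k + m)) / e ^ 1"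
    proof (rule Cauchy_inequality)
      show "hh k m holomorphic_on ball l e" using holomorphic_on_subset[OF holo] sub ball_subset_cball by blast
      show "continuous_on (cball l e) (hh k m)"
        using holomorphic_on_imp_continuous_on[OF holomorphic_on_subset[OF holo sub]] .
      show "0 < e" by (rule eR(1))
      fix x assume "norm (l - x) = e"
      then have "x \<in> cball l e" by (simp add: dist_norm)
      then show "cmod (hh k m x) \<le> 2 / r ^ (k + m)" using hb cb[OF l] by auto
    qed
    then show ?thesis by (simp add: mult.commute)
  qed
  define Z where "Z = ball (0::complex) (r / 4) \<times> ball (0::complex) (r / 4)"
  define \<Omega> where "\<Omega> = {(z1, z2, l). (z1, z2) \<in> Z \<and> l \<in> L}"
  have oZ: "open Z" by (simp add: Z_def open_Times)
  have Z0: "(0, 0) \<in> Z" using r by (simp add: Z_def)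
  have \<Omega>eq: "\<Omega> = ball 0 (r / 4) \<times> (ball 0 (r / 4) \<times> L)" by (auto simp: \<Omega>_def Z_def)
  have o\<Omega>: "open \<Omega>" unfolding \<Omega>eq using L(1) by (simp add: open_Times)
  have zin: "cmod (fst z) \<le> r / 4" "cmod (fst (snd z)) \<le> r / 4" "snd (snd z) \<in> closure L"
    if "z \<in> \<Omega>" for z
    using that closure_subset[of L] by (auto simp: \<Omega>eq)
  define B where "B = 4 + 2 / e"
  have B2: "2 \<le> B" "4 \<le> B" "2 / e \<le> B" using eR by (auto simp: B_def)
  have hbz: "cmod (hh k m (snd (snd z))) \<le> 2 / r ^ (k + m)" if "z \<in> \<Omega>" for z k m
  proof -
    have "snd (snd z) \<in> cball (snd (snd z)) e" using eR(1) by simp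
    then have "snd (snd z) \<in> Ann" using cb[OF zin(3)[OF that]] by blast
    then show ?thesis by (rule hb)
  qed
  have b0: "cmod (tm hh n m z) \<le> B * (1 / 2) ^ (n + m)" if z: "z \<in> \<Omega>" for z n m
  proof (cases n)
    case 0 then show ?thesis using B2 by (simp add: tm_def)
  next
    case (Suc k)
    have "cmod (tm hh n m z) \<le> 2 * (1 / 2) ^ (Suc k + m)"
      unfolding tm_def using Suc tb3[OF r hbz[OF z] _ zin(1,2)[OF z]] by simp
    also have "\<dots> \<le> B * (1 / 2) ^ (n + m)" unfolding Suc[symmetric] by (rule mult_right_mono) (use B2 in auto)
    finally show ?thesis .
  qed
  have b1: "cmod (ta1 hh n m z) \<le> B * (1 / 2) ^ (n + m)" if z: "z \<in> \<Omega>" for z n m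
  proof (cases n)
    case 0 then show ?thesis using B2 by (simp add: ta1_def)
  next
    case (Suc k)
    have "cmod (ta1 hh n m z) \<le> (2 * 2) * (1 / 2) ^ (Suc k + m)"
      unfolding ta1_def using Suc tb1[OF r hbz[OF z] _ zin(1,2)[OF z]] by simp
    also have "\<dots> \<le> B * (1 / 2) ^ (n + m)" unfolding Suc[symmetric] by (rule mult_right_mono) (use B2 in auto)
    finally show ?thesis .
  qed
  have b2: "cmod (ta2 hh n m z) \<le> B * (1 / 2) ^ (n + m)" if z: "z \<in> \<Omega>" for z n m
  proof (cases n)
    case 0 then show ?thesis using B2 by (simp add: ta2_def)
  next
    case (Suc k)
    have "cmod (ta2 hh n m z) \<le> (2 * 2) * (1 / 2) ^ (Suc k + m)"
      unfolding ta2_def using Suc tb2[OF r hbz[OF z] _ zin(1,2)[OF z]] by simp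
    also have "\<dots> \<le> B * (1 / 2) ^ (n + m)" unfolding Suc[symmetric] by (rule mult_right_mono) (use B2 in auto)
    finally show ?thesis .
  qed
  have b3: "cmod (ta3 hh n m z) \<le> B * (1 / 2) ^ (n + m)" if z: "z \<in> \<Omega>" for z n m
  proof (cases n)
    case 0 then show ?thesis using B2 by (simp add: ta3_def)
  next
    case (Suc k)
    have "cmod (ta3 hh n m z) \<le> (2 / e) * (1 / 2) ^ (Suc k + m)"
      unfolding ta3_def using Suc tb3[OF r db[OF zin(3)[OF z]] _ zin(1,2)[OF z]] eR by simp
    also have "\<dots> \<le> B * (1 / 2) ^ (n + m)" unfolding Suc[symmetric] by (rule mult_right_mono) (use B2 in auto)
    finally show ?thesis .
  qed
  have AL: "snd (snd z) \<in> L0s \<xi>" if "z \<in> \<Omega>" for z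
    using zin(3)[OF that] L(2) by auto
  have H: "holo3 (\<lambda>z. \<Sum>n. \<Sum>m. tm hh n m z) \<Omega>"
    by (rule holo_from_series[OF o\<Omega> open_L0s AL holo _ _ b0 b1 b2 b3]) auto
  have U: "uniform_limit \<Omega> (\<lambda>(N, M) x. \<Sum>n\<le>N. \<Sum>m\<le>M. tm hh n m x) (\<lambda>z. \<Sum>n. \<Sum>m. tm hh n m z)
      (sequentially \<times>\<^sub>F sequentially)"
    by (rule dbl_unif[OF b0]) auto
  have feq: "(\<lambda>(N, M) (z1, z2, l). \<Sum>n\<in>{1..N}. \<Sum>m\<in>{..M}.
            XX n (int n - int m) (l, \<xi>, a, b, c, d) * z1 ^ n * z2 ^ m)
     = (\<lambda>(N, M) x. \<Sum>n\<le>N. \<Sum>m\<le>M. tm hh n m x)"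
  proof (intro ext)
    fix NM :: "nat \<times> nat" and x :: c3
    obtain N M where NM: "NM = (N, M)" by (cases NM)
    obtain z1 z2 l where x: "x = (z1, z2, l)" by (cases x) auto
    have "(\<Sum>n\<le>N. \<Sum>m\<le>M. tm hh n m (z1, z2, l)) = (\<Sum>n\<in>{1..N}. \<Sum>m\<le>M. tm hh n m (z1, z2, l))"
      by (subst sum_from1) (simp add: tm_def)
    also have "\<dots> = (\<Sum>n\<in>{1..N}. \<Sum>m\<in>{..M}. XX n (int n - int m) (l, \<xi>, a, b, c, d) * z1 ^ n * z2 ^ m)"
      by (intro sum.cong refl) (auto simp: tm_def XX_UU hh_def)
    finally show "(\<lambda>(N, M) (z1, z2, l). \<Sum>n\<in>{1..N}. \<Sum>m\<in>{..M}.
            XX n (int n - int m) (l, \<xi>, a, b, c, d) * z1 ^ n * z2 ^ m) NM x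
       = (\<lambda>(N, M) x. \<Sum>n\<le>N. \<Sum>m\<le>M. tm hh n m x) NM x"
      by (simp add: NM x)
  qed
  show ?thesis
    using oZ Z0 H U unfolding \<Omega>_def feq by blast
qed

theorem mainTheorem9:
  "\<exists>X :: nat \<Rightarrow> int \<Rightarrow> params \<Rightarrow> complex.
     (\<forall>n i. rational_regular_on (X n i) regular_params) \<and>
     (\<forall>\<Lambda> \<xi> a b c d. (\<Lambda>, \<xi>, a, b, c, d) \<in> regular_params \<longrightarrow>
        ansatz (\<lambda>n i. X n i (\<Lambda>, \<xi>, a, b, c, d)) \<and> X 1 1 (\<Lambda>, \<xi>, a, b, c, d) = 1 \<and>
        qPA1_sol \<Lambda> \<xi> a b c d (\<lambda>n i. X n i (\<Lambda>, \<xi>, a, b, c, d)) \<and>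
        (\<forall>y. ansatz y \<and> y 1 1 = 1 \<and> qPA1_sol \<Lambda> \<xi> a b c d y \<longrightarrow>
             y = (\<lambda>n i. X n i (\<Lambda>, \<xi>, a, b, c, d)))) \<and>
     (\<forall>\<xi> a b c d. \<xi> \<noteq> 0 \<and> norm \<xi> < 1 \<and> a \<noteq> 0 \<and> b \<noteq> 0 \<and> c \<noteq> 0 \<and> d \<noteq> 0 \<longrightarrow>
        (\<forall>\<Lambda>\<in>L0s \<xi>. nonres \<Lambda> \<xi>) \<and>
        (\<forall>L. open L \<and> closure L \<subseteq> L0s \<xi> \<longrightarrow>
           (\<exists>Z :: (complex \<times> complex) set. \<exists>F. open Z \<and> (0, 0) \<in> Z \<and>
              holo3 F {(z1, z2, l). (z1, z2) \<in> Z \<and> l \<in> L} \<and>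
              uniform_limit {(z1, z2, l). (z1, z2) \<in> Z \<and> l \<in> L}
                (\<lambda>(N, M) (z1, z2, l). \<Sum>n\<in>{1..N}. \<Sum>m\<in>{..M}.
                    X n (int n - int m) (l, \<xi>, a, b, c, d) * z1 ^ n * z2 ^ m)
                F (sequentially \<times>\<^sub>F sequentially))))"
  proof -
  have 1: "\<forall>n i. rational_regular_on (XX n i) regular_params" using rr_XX by blast
  have 2: "\<forall>\<Lambda> \<xi> a b c d. (\<Lambda>, \<xi>, a, b, c, d) \<in> regular_params \<longrightarrow>
        ansatz (\<lambda>n i. XX n i (\<Lambda>, \<xi>, a, b, c, d)) \<and> XX 1 1 (\<Lambda>, \<xi>, a, b, c, d) = 1 \<and>
        qPA1_sol \<Lambda> \<xi> a b c d (\<lambda>n i. XX n i (\<Lambda>, \<xi>, a, b, c, d)) \<and>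
        (\<forall>y. ansatz y \<and> y 1 1 = 1 \<and> qPA1_sol \<Lambda> \<xi> a b c d y \<longrightarrow>
             y = (\<lambda>n i. XX n i (\<Lambda>, \<xi>, a, b, c, d)))"
    using alg_part by blast
  have 3: "\<forall>\<xi> a b c d. \<xi> \<noteq> 0 \<and> norm \<xi> < 1 \<and> a \<noteq> 0 \<and> b \<noteq> 0 \<and> c \<noteq> 0 \<and> d \<noteq> 0 \<longrightarrow>
        (\<forall>\<Lambda>\<in>L0s \<xi>. nonres \<Lambda> \<xi>) \<and>
        (\<forall>L. open L \<and> closure L \<subseteq> L0s \<xi> \<longrightarrow>
           (\<exists>Z :: (complex \<times> complex) set. \<exists>F. open Z \<and> (0, 0) \<in> Z \<and>
              holo3 F {(z1, z2, l). (z1, z2) \<in> Z \<and> l \<in> L} \<and>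
              uniform_limit {(z1, z2, l). (z1, z2) \<in> Z \<and> l \<in> L}
                (\<lambda>(N, M) (z1, z2, l). \<Sum>n\<in>{1..N}. \<Sum>m\<in>{..M}.
                    XX n (int n - int m) (l, \<xi>, a, b, c, d) * z1 ^ n * z2 ^ m)
                F (sequentially \<times>\<^sub>F sequentially)))"
  proof (intro allI impI conjI ballI)
    fix \<xi> a b c d :: complex and \<Lambda>
    assume h: "\<xi> \<noteq> 0 \<and> norm \<xi> < 1 \<and> a \<noteq> 0 \<and> b \<noteq> 0 \<and> c \<noteq> 0 \<and> d \<noteq> 0" and "\<Lambda> \<in> L0s \<xi>"
    then show "nonres \<Lambda> \<xi>" by (intro nonres_L0s) auto
  next
    fix \<xi> a b c d :: complex and L :: "complex set"
    assume h: "\<xi> \<noteq> 0 \<and> norm \<xi> < 1 \<and> a \<noteq> 0 \<and> b \<noteq> 0 \<and> c \<noteq> 0 \<and> d \<noteq> 0"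
      and hL: "open L \<and> closure L \<subseteq> L0s \<xi>"
    show "\<exists>Z :: (complex \<times> complex) set. \<exists>F. open Z \<and> (0, 0) \<in> Z \<and>
              holo3 F {(z1, z2, l). (z1, z2) \<in> Z \<and> l \<in> L} \<and>
              uniform_limit {(z1, z2, l). (z1, z2) \<in> Z \<and> l \<in> L}
                (\<lambda>(N, M) (z1, z2, l). \<Sum>n\<in>{1..N}. \<Sum>m\<in>{..M}.
                    XX n (int n - int m) (l, \<xi>, a, b, c, d) * z1 ^ n * z2 ^ m)
                F (sequentially \<times>\<^sub>F sequentially)"
      using h hL by (intro analytic_part) auto
  qed
  show ?thesis
    by (rule exI[of _ XX]) (use 1 2 3 in blast)
qed

end
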